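(* Let $G\cong\mathbb{R}^{d_1}\times\mathbb{R}^{d_2}$ be a 2-step stratified group with sub-Laplacian $\mathcal{L}$. For $\boldsymbol{\xi}=(\xi,\mu)\in(\mathbb{R}^{d_1}\setminus\{0\})\times(\mathbb{R}^{d_2}\setminus\{0\})$ and $t\in\mathbb{R}$, let $(x^t,u^t,\xi^t,\mu^t)$ denote the solution at time $t$ of the Hamilton equations with Hamiltonian $\mathcal{H}(x,u,\xi,\mu)=|\xi+J_\mu x/2|$ and initial datum $(0,0,\xi,\mu)$. Set $\theta \mathrel{:=} \frac{t|\mu|}{2|\xi|}$, $\bar\mu\mathrel{:=}\mu/|\mu|$, $\bar\xi\mathrel{:=}\xi/|\xi|$. Then \[ x^t = \frac{1}{|\mu|}\frac{\exp(2\theta J_{\bar\mu})-I}{J_{\bar\mu}}\xi = t\exp(\theta J_{\bar\mu})\frac{\sinh(\theta J_{\bar\mu})}{\theta J_{\bar\mu}}\bar\xi,\qquad \xi^t = \tfrac12(\exp(2\theta J_{\bar\mu})+I)\xi = \exp(\theta J_{\bar\mu})\cosh(\theta J_{\bar\mu})\xi, \] \[ u^t = \frac{t^2}{4}\int_0^1\Big[\frac{\exp(2\tau\theta J_{\bar\mu})-I}{\theta J_{\bar\mu}}\bar\xi,\exp(2\tau\theta J_{\bar\mu})\bar\xi\Big]d\tau,\qquad \mu\cdot u^t = \frac{t|\xi|}{2}\Big[1-\Big\langle\frac{\sinh(\theta J_{\bar\mu})}{\theta J_{\bar\mu}}\cosh(\theta J_{\bar\mu})\bar\xi,\bar\xi\Big\rangle\Big].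 \] Moreover, if $G$ is of Heisenberg type, then \[ x^t = t\frac{\sin\theta}{\theta}((\cos\theta)I+(\sin\theta)J_{\bar\mu})\bar\xi,\qquad \xi^t=\cos\theta((\cos\theta)I+(\sin\theta)J_{\bar\mu})\xi,\qquad u^t=\frac{t^2}{4\theta}\Big[1-\frac{\sin\theta}{\theta}\cos\theta\Big]\bar\mu. \]
   Context: $G$ is a 2-step stratified Lie group identified with $\mathbb{R}^{d_1}_x\times\mathbb{R}^{d_2}_u$ via exponential coordinates, coordinates on $\mathfrak{g}_1$ orthonormal for the inner product $\langle\cdot,\cdot\rangle$ making the vector fields $X_j$ of $\mathcal{L}=-\sum X_j^2$ orthonormal; $[\cdot,\cdot]$ is the Lie bracket $\mathbb{R}^{d_1}\times\mathbb{R}^{d_1}\to\mathbb{R}^{d_2}$. $J_\mu$ is the skew-symmetric matrix with $\langle J_\mu x,x'\rangle=\mu\cdot[x,x']$. Matrix functions such as $\frac{\exp(sJ)-I}{J}$, $\frac{\sinh(\theta J)}{\theta J}$ are defined by the corresponding entire power series (no invertibility needed); expressions with $\theta$ in a denominator are understood by continuity at $\theta=0$. $G$ is of Heisenberg type if $-J_\mu^2=|\mu|^2I$ for all $\mu$. *)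

theory Defs
  imports "HOL-Analysis.Analysis"
begin

text \<open>A 2-step stratified Lie algebra structure on R^d1 + R^d2 (exponential coordinates,
orthonormal coordinates on the first layer): a skew-symmetric bilinear bracket
br : R^d1 x R^d1 -> R^d2 whose image spans the second layer.\<close>
definition two_step_bracket :: "(real^'n \<Rightarrow> real^'n \<Rightarrow> real^'m) \<Rightarrow> bool" where
  "two_step_bracket br \<longleftrightarrow> bilinear br \<and> (\<forall>x y. br x y = - br y x)
      \<and> span (range (\<lambda>(x, y). br x y)) = UNIV"

text \<open>J_mu: the matrix with  (J_mu x) . x' = mu . [x, x'].\<close>
definition Jmat :: "(real^'n \<Rightarrow> real^'n \<Rightarrow> real^'m) \<Rightarrow> real^'m \<Rightarrow> real^'n^'n" where
  "Jmat br \<mu> = (\<chi> k j. \<mu> \<bullet> br (axis j 1) (axis k 1))"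

definition heisenberg_type :: "(real^'n \<Rightarrow> real^'n \<Rightarrow> real^'m) \<Rightarrow> bool" where
  "heisenberg_type br \<longleftrightarrow> (\<forall>\<mu>. - (Jmat br \<mu> ** Jmat br \<mu>) = (norm \<mu>)\<^sup>2 *\<^sub>R mat 1)"

fun mpow :: "real^'n^'n \<Rightarrow> nat \<Rightarrow> real^'n^'n" where
  "mpow A 0 = mat 1"
| "mpow A (Suc k) = A ** mpow A k"

definition mpowser :: "(nat \<Rightarrow> real) \<Rightarrow> real^'n^'n \<Rightarrow> real^'n^'n" where
  "mpowser c A = (\<Sum>k. c k *\<^sub>R mpow A k)"

definition mexp :: "real^'n^'n \<Rightarrow> real^'n^'n" where
  "mexp A = mpowser (\<lambda>k. 1 / fact k) A"

definition mcosh :: "real^'n^'n \<Rightarrow> real^'n^'n" where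
  "mcosh A = mpowser (\<lambda>k. if even k then 1 / fact k else 0) A"

text \<open>sinh(A)/A, i.e. the series of sinh(z)/z evaluated at A\<close>
definition msinhc :: "real^'n^'n \<Rightarrow> real^'n^'n" where
  "msinhc A = mpowser (\<lambda>k. if even k then 1 / fact (k + 1) else 0) A"

text \<open>(exp(s A) - I)/A, i.e. the series of (exp(s z) - 1)/z evaluated at A\<close>
definition mexpm1_div :: "real \<Rightarrow> real^'n^'n \<Rightarrow> real^'n^'n" where
  "mexpm1_div s A = mpowser (\<lambda>k. s ^ (k + 1) / fact (k + 1)) A"

text \<open>sin(theta)/theta, extended by continuity at 0\<close>
definition sinc :: "real \<Rightarrow> real" where
  "sinc \<theta> = (if \<theta> = 0 then 1 else sin \<theta> / \<theta>)"

definition hamiltonian_curve ::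
  "(('a::real_inner \<times> 'a) \<Rightarrow> real) \<Rightarrow> (real \<Rightarrow> 'a \<times> 'a) \<Rightarrow> bool" where
  "hamiltonian_curve H \<gamma> \<longleftrightarrow> (\<forall>t. \<exists>Dq Dp.
      (H has_derivative (\<lambda>h. Dq \<bullet> fst h + Dp \<bullet> snd h)) (at (\<gamma> t))
      \<and> (\<gamma> has_vector_derivative (Dp, - Dq)) (at t))"

definition sR_hamiltonian :: "(real^'n \<Rightarrow> real^'n \<Rightarrow> real^'m)
    \<Rightarrow> ((real^'n) \<times> (real^'m)) \<times> ((real^'n) \<times> (real^'m)) \<Rightarrow> real" where
  "sR_hamiltonian br z = (case z of ((x, u), (\<xi>, \<mu>)) \<Rightarrow> norm (\<xi> + (1/2) *\<^sub>R (Jmat br \<mu> *v x)))"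

end

theory Submission
  imports Defs
begin


definition entire :: "(nat \<Rightarrow> real) \<Rightarrow> bool" where
  "entire c \<longleftrightarrow> (\<forall>r. summable (\<lambda>k. \<bar>c k\<bar> * r ^ k))"

definition conv :: "(nat \<Rightarrow> real) \<Rightarrow> (nat \<Rightarrow> real) \<Rightarrow> nat \<Rightarrow> real" where
  "conv a b k = (\<Sum>p\<le>k. a p * b (k - p))"

lemma mpow_add: "mpow A (m + n) = mpow A m ** mpow A n"
  by (induction m) (simp_all add: matrix_mul_assoc)

lemma mpow_entry_bound:
  fixes B :: "real^'n^'n"
  obtains K where "K > 0" "\<And>k i j. \<bar>mpow B k $ i $ j\<bar> \<le> K ^ k"
proof -
  define K where "K = 1 + (\<Sum>i\<in>UNIV. \<Sum>l\<in>UNIV. \<bar>B $ i $ l\<bar>)"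
  have K0: "K > 0" unfolding K_def by (smt (verit) sum_nonneg abs_ge_zero)
  have row: "(\<Sum>l\<in>UNIV. \<bar>B $ i $ l\<bar>) \<le> K" for i
  proof -
    have "(\<Sum>l\<in>UNIV. \<bar>B $ i $ l\<bar>) \<le> (\<Sum>i\<in>UNIV. \<Sum>l\<in>UNIV. \<bar>B $ i $ l\<bar>)"
      by (rule member_le_sum) (auto intro: sum_nonneg)
    then show ?thesis unfolding K_def by simp
  qed
  have "\<bar>mpow B k $ i $ j\<bar> \<le> K ^ k" for k i j
  proof (induction k arbitrary: i j)
    case 0
    then show ?case by (simp add: mat_def)
  next
    case (Suc k)
    have "\<bar>mpow B (Suc k) $ i $ j\<bar> = \<bar>\<Sum>l\<in>UNIV. B $ i $ l * mpow B k $ l $ j\<bar>"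
      by (simp add: matrix_matrix_mult_def)
    also have "\<dots> \<le> (\<Sum>l\<in>UNIV. \<bar>B $ i $ l\<bar> * K ^ k)"
      by (rule order_trans[OF sum_abs]) (auto intro!: sum_mono simp: abs_mult intro: mult_left_mono Suc.IH)
    also have "\<dots> = (\<Sum>l\<in>UNIV. \<bar>B $ i $ l\<bar>) * K ^ k" by (simp add: sum_distrib_right)
    also have "\<dots> \<le> K * K ^ k" using row[of i] K0 by (intro mult_right_mono) auto
    finally show ?case by simp
  qed
  then show ?thesis using K0 that by blast
qed

lemma norm_mat_le: "norm (M::real^'n^'n) \<le> (\<Sum>i\<in>UNIV. \<Sum>j\<in>UNIV. \<bar>M $ i $ j\<bar>)"
proof -
  have "norm M \<le> (\<Sum>i\<in>UNIV. norm (M $ i))"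
    by (simp add: norm_vec_def L2_set_le_sum)
  also have "\<dots> \<le> (\<Sum>i\<in>UNIV. \<Sum>j\<in>UNIV. \<bar>M $ i $ j\<bar>)"
    by (intro sum_mono) (simp add: norm_le_l1_cart)
  finally show ?thesis .
qed

lemma entire_abs_summable:
  assumes "entire c" "\<And>k. \<bar>f k\<bar> \<le> K ^ k * C"
  shows "summable (\<lambda>k. \<bar>c k * f k\<bar>)"
proof (rule summable_comparison_test'[where N=0])
  show "summable (\<lambda>k. \<bar>c k\<bar> * K ^ k * C)"
    using assms(1) unfolding entire_def by (intro summable_mult2) auto
  fix k show "norm \<bar>c k * f k\<bar> \<le> \<bar>c k\<bar> * K ^ k * C"
    using assms(2)[of k] by (simp add: abs_mult mult.assoc mult_left_mono)
qed

lemma mp_summable_norm: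
  fixes B :: "real^'n^'n"
  assumes "entire c"
  shows "summable (\<lambda>k. norm (c k *\<^sub>R mpow B k))"
proof -
  obtain K where K: "K > 0" "\<And>k i j. \<bar>mpow B k $ i $ j\<bar> \<le> K ^ k"
    using mpow_entry_bound by blast
  define C where "C = real (CARD('n) * CARD('n))"
  show ?thesis
  proof (rule summable_comparison_test'[where N=0])
    show "summable (\<lambda>k. \<bar>c k\<bar> * K ^ k * C)"
      using assms(1) unfolding entire_def by (intro summable_mult2) auto
    fix k
    have "norm (c k *\<^sub>R mpow B k) = \<bar>c k\<bar> * norm (mpow B k)" by simp
    also have "norm (mpow B k) \<le> (\<Sum>i\<in>(UNIV::'n set). \<Sum>j\<in>(UNIV::'n set). K ^ k)"
    proof -
      have "(\<Sum>i\<in>UNIV. \<Sum>j\<in>UNIV. \<bar>mpow B k $ i $ j\<bar>) \<le> (\<Sum>i\<in>(UNIV::'n set). \<Sum>j\<in>(UNIV::'n set). K ^ k)"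
        by (intro sum_mono K(2))
      then show ?thesis using norm_mat_le[of "mpow B k"] by linarith
    qed
    also have "(\<Sum>i\<in>(UNIV::'n set). \<Sum>j\<in>(UNIV::'n set). K ^ k) = K ^ k * C"
      by (simp add: C_def)
    finally show "norm (norm (c k *\<^sub>R mpow B k)) \<le> \<bar>c k\<bar> * K ^ k * C"
      by (simp add: mult.assoc mult_left_mono)
  qed
qed

lemma mp_summable:
  fixes B :: "real^'n^'n"
  assumes "entire c"
  shows "summable (\<lambda>k. c k *\<^sub>R mpow B k)"
  using mp_summable_norm[OF assms] by (rule summable_norm_cancel)

lemma mp_linear:
  fixes B :: "real^'n^'n"
  assumes "entire c" "bounded_linear L"
  shows "L (mpowser c B) = (\<Sum>k. c k *\<^sub>R L (mpow B k))"
  using bounded_linear.suminf[OF assms(2) mp_summable[OF assms(1)]]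
  by (simp add: mpowser_def linear_scale[OF bounded_linear.linear[OF assms(2)]])

lemma mp_nth:
  fixes B :: "real^'n^'n"
  assumes "entire c"
  shows "mpowser c B $ i $ j = (\<Sum>k. c k * mpow B k $ i $ j)"
proof -
  have "bounded_linear (\<lambda>M::real^'n^'n. M $ i $ j)"
    by (rule bounded_linear_compose[OF bounded_linear_vec_nth bounded_linear_vec_nth])
  from mp_linear[OF assms this] show ?thesis by simp
qed

lemma mp_nth_summable:
  fixes B :: "real^'n^'n"
  assumes "entire c"
  shows "summable (\<lambda>k. \<bar>c k * mpow B k $ i $ j\<bar>)"
proof -
  obtain K where K: "K > 0" "\<And>k i j. \<bar>mpow B k $ i $ j\<bar> \<le> K ^ k"
    using mpow_entry_bound by blast
  show ?thesis by (rule entire_abs_summable[OF assms, where K=K and C=1]) (simp add: K)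
qed



lemma entireI: "(\<And>r. r \<ge> 0 \<Longrightarrow> summable (\<lambda>k. \<bar>c k\<bar> * r ^ k)) \<Longrightarrow> entire c"
  unfolding entire_def
proof (intro allI)
  fix r assume H: "\<And>r. r \<ge> 0 \<Longrightarrow> summable (\<lambda>k. \<bar>c k\<bar> * r ^ k)"
  show "summable (\<lambda>k. \<bar>c k\<bar> * r ^ k)"
    by (rule summable_comparison_test'[where N=0, OF H[of "\<bar>r\<bar>"]]) (auto simp: abs_mult power_abs)
qed

lemma entireD: "entire c \<Longrightarrow> summable (\<lambda>k. \<bar>c k\<bar> * r ^ k)"
  unfolding entire_def by blast

lemma entire_bound: "entire d \<Longrightarrow> (\<And>k. \<bar>c k\<bar> \<le> C * \<bar>d k\<bar>) \<Longrightarrow> entire c"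
proof (rule entireI)
  fix r :: real assume "entire d" "\<And>k. \<bar>c k\<bar> \<le> C * \<bar>d k\<bar>" "r \<ge> 0"
  then show "summable (\<lambda>k. \<bar>c k\<bar> * r ^ k)"
  proof (intro summable_comparison_test'[where N=0, OF summable_mult[OF entireD[of d r], of C]])
    fix k
    have "\<bar>c k\<bar> * r ^ k \<le> (C * \<bar>d k\<bar>) * r ^ k"
      by (rule mult_right_mono) (use \<open>\<And>k. \<bar>c k\<bar> \<le> C * \<bar>d k\<bar>\<close> \<open>r \<ge> 0\<close> in auto)
    then show "norm (\<bar>c k\<bar> * r ^ k) \<le> C * (\<bar>d k\<bar> * r ^ k)"
      using \<open>r \<ge> 0\<close> by (simp add: mult.assoc)
  qed simp
qed

lemma entire_add: "entire c \<Longrightarrow> entire d \<Longrightarrow> entire (\<lambda>k. c k + d k)"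
proof (rule entireI)
  fix r :: real assume "entire c" "entire d" "r \<ge> 0"
  then show "summable (\<lambda>k. \<bar>c k + d k\<bar> * r ^ k)"
    by (intro summable_comparison_test'[where N=0, OF summable_add[OF entireD[of c r] entireD[of d r]]])
       (auto simp: distrib_right[symmetric] intro!: mult_right_mono)
qed

lemma entire_scale: "entire c \<Longrightarrow> entire (\<lambda>k. a * c k)"
  by (rule entire_bound[where C="\<bar>a\<bar>"]) (auto simp: abs_mult)

lemma entire_pow: "entire c \<Longrightarrow> entire (\<lambda>k. c k * s ^ k)"
proof (rule entireI)
  fix r :: real assume "entire c" "r \<ge> 0"
  then show "summable (\<lambda>k. \<bar>c k * s ^ k\<bar> * r ^ k)"
    using entireD[of c "\<bar>s\<bar> * r"] by (simp add: abs_mult power_abs power_mult_distrib mult.assoc)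
qed

lemma entire_exp: "entire (\<lambda>k. 1 / fact k)"
proof (rule entireI)
  fix r :: real
  show "summable (\<lambda>k. \<bar>1 / fact k\<bar> * r ^ k)"
    using summable_exp[of r] by (simp add: divide_inverse)
qed

lemma entire_conv:
  assumes "entire a" "entire b"
  shows "entire (conv a b)"
proof (rule entireI)
  fix r :: real assume r: "r \<ge> 0"
  let ?f = "\<lambda>k. \<bar>a k\<bar> * r ^ k" and ?g = "\<lambda>k. \<bar>b k\<bar> * r ^ k"
  have "summable (\<lambda>k. \<Sum>i\<le>k. ?f i * ?g (k - i))"
    by (rule summable_Cauchy_product) (use entireD[OF assms(1)] entireD[OF assms(2)] r in auto)
  then show "summable (\<lambda>k. \<bar>conv a b k\<bar> * r ^ k)"
  proof (rule summable_comparison_test'[where N=0])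
    fix k
    have "\<bar>conv a b k\<bar> * r ^ k \<le> (\<Sum>i\<le>k. \<bar>a i\<bar> * \<bar>b (k - i)\<bar>) * r ^ k"
      unfolding conv_def using r by (intro mult_right_mono order_trans[OF sum_abs]) (auto simp: abs_mult)
    also have "\<dots> = (\<Sum>i\<le>k. ?f i * ?g (k - i))"
      unfolding sum_distrib_right
    proof (rule sum.cong[OF refl])
      fix i assume "i \<in> {..k}"
      then have "r ^ i * r ^ (k - i) = r ^ k" by (simp flip: power_add)
      then show "\<bar>a i\<bar> * \<bar>b (k - i)\<bar> * r ^ k = ?f i * ?g (k - i)"
        by (metis (no_types, lifting) mult.assoc mult.left_commute)
    qed
    finally show "norm (\<bar>conv a b k\<bar> * r ^ k) \<le> (\<Sum>i\<le>k. ?f i * ?g (k - i))"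
      using r by simp
  qed
qed

lemma entire_diffs:
  assumes "entire a" shows "entire (diffs a)"
proof (rule entireI)
  fix r :: real assume r: "r \<ge> 0"
  have "summable (\<lambda>n. diffs (\<lambda>k. \<bar>a k\<bar>) n * r ^ n)"
    by (rule termdiff_converges_all) (use entireD[OF assms] in auto)
  then show "summable (\<lambda>k. \<bar>diffs a k\<bar> * r ^ k)"
    by (simp add: diffs_def abs_mult)
qed

lemma mp_add:
  fixes B :: "real^'n^'n"
  assumes "entire c" "entire d"
  shows "mpowser c B + mpowser d B = mpowser (\<lambda>k. c k + d k) B"
  unfolding mpowser_def
  by (simp add: suminf_add[OF mp_summable[OF assms(1)] mp_summable[OF assms(2)]] scaleR_add_left)

lemma mp_scale:
  fixes B :: "real^'n^'n"
  assumes "entire c"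
  shows "a *\<^sub>R mpowser c B = mpowser (\<lambda>k. a * c k) B"
  unfolding mpowser_def
  by (simp add: suminf_scaleR_right[OF mp_summable[OF assms(1)]])

lemma mp_finite:
  fixes B :: "real^'n^'n"
  assumes "finite N" "\<And>k. k \<notin> N \<Longrightarrow> c k = 0"
  shows "mpowser c B = (\<Sum>k\<in>N. c k *\<^sub>R mpow B k)"
  unfolding mpowser_def by (rule suminf_finite) (use assms in auto)

lemma mp_zero: "mpowser (\<lambda>k. 0) B = 0"
  using mp_finite[of "{}" "\<lambda>k. 0" B] by simp

lemma mp_one: "mpowser (\<lambda>k. if k = 0 then 1 else 0) B = mat 1"
  using mp_finite[of "{0}" "\<lambda>k. if k = 0 then 1 else 0" B] by simp

lemma mp_X: "mpowser (\<lambda>k. if k = 1 then 1 else 0) B = B"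
  using mp_finite[of "{1}" "\<lambda>k. if k = 1 then 1 else 0" B] by simp

lemma entire_finite: "finite N \<Longrightarrow> (\<And>k. k \<notin> N \<Longrightarrow> c k = 0) \<Longrightarrow> entire c"
proof (rule entireI)
  fix r :: real assume "finite N" "\<And>k. k \<notin> N \<Longrightarrow> c k = 0"
  then show "summable (\<lambda>k. \<bar>c k\<bar> * r ^ k)"
    by (intro summable_finite[of N]) auto
qed

lemma mpow_scaleR: "mpow (s *\<^sub>R B) k = s ^ k *\<^sub>R mpow B k"
proof (induction k)
  case (Suc k)
  then show ?case
    by (simp add: vec_eq_iff matrix_matrix_mult_def sum_distrib_left algebra_simps)
qed simp

lemma mp_scaleR_arg: "mpowser c (s *\<^sub>R B) = mpowser (\<lambda>k. c k * s ^ k) B"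
  unfolding mpowser_def mpow_scaleR by simp

lemma mp_mult:
  fixes B :: "real^'n^'n"
  assumes a: "entire a" and b: "entire b"
  shows "mpowser a B ** mpowser b B = mpowser (conv a b) B"
proof -
  have "(mpowser a B ** mpowser b B) $ i $ j = mpowser (conv a b) B $ i $ j" for i j
  proof -
    let ?f = "\<lambda>l k. (\<Sum>p\<le>k. (a p * mpow B p $ i $ l) * (b (k - p) * mpow B (k - p) $ l $ j))"
    have prod: "mpowser a B $ i $ l * mpowser b B $ l $ j = (\<Sum>k. ?f l k)" for l
      unfolding mp_nth[OF a] mp_nth[OF b]
      by (rule Cauchy_product) (use mp_nth_summable[OF a] mp_nth_summable[OF b] in auto)
    have summ: "summable (?f l)" for l
      by (rule summable_Cauchy_product) (use mp_nth_summable[OF a] mp_nth_summable[OF b] in auto)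
    have inner: "(\<Sum>l\<in>UNIV. ?f l k) = conv a b k * mpow B k $ i $ j" for k
    proof -
      have "(\<Sum>l\<in>UNIV. ?f l k) = (\<Sum>p\<le>k. a p * b (k - p) * (\<Sum>l\<in>UNIV. mpow B p $ i $ l * mpow B (k - p) $ l $ j))"
        by (subst sum.swap) (simp add: sum_distrib_left algebra_simps)
      also have "\<dots> = (\<Sum>p\<le>k. a p * b (k - p) * mpow B k $ i $ j)"
      proof (rule sum.cong[OF refl])
        fix p assume "p \<in> {..k}"
        then have "mpow B k = mpow B p ** mpow B (k - p)"
          using mpow_add[of B p "k - p"] by simp
        then show "a p * b (k - p) * (\<Sum>l\<in>UNIV. mpow B p $ i $ l * mpow B (k - p) $ l $ j) = a p * b (k - p) * mpow B k $ i $ j"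
          by (simp add: matrix_matrix_mult_def)
      qed
      also have "\<dots> = conv a b k * mpow B k $ i $ j"
        by (simp add: conv_def sum_distrib_right)
      finally show ?thesis .
    qed
    have "(mpowser a B ** mpowser b B) $ i $ j = (\<Sum>l\<in>UNIV. \<Sum>k. ?f l k)"
      by (simp add: matrix_matrix_mult_def prod)
    also have "\<dots> = (\<Sum>k. \<Sum>l\<in>UNIV. ?f l k)"
      by (rule suminf_sum[symmetric]) (rule summ)
    also have "\<dots> = (\<Sum>k. conv a b k * mpow B k $ i $ j)"
      by (simp add: inner)
    also have "\<dots> = mpowser (conv a b) B $ i $ j"
      by (simp add: mp_nth[OF entire_conv[OF a b]])
    finally show ?thesis .
  qed
  then show ?thesis by (simp add: vec_eq_iff)
qed



lemma bl_fin: "linear (f :: real^'n^'n \<Rightarrow> 'b::real_normed_vector) \<Longrightarrow> bounded_linear f"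
  using linear_conv_bounded_linear by blast

lemma bl_left: "bounded_linear (\<lambda>M::real^'n^'n. B ** M)"
  by (intro bl_fin linearI) (simp_all add: vec_eq_iff matrix_matrix_mult_def sum_distrib_left algebra_simps sum.distrib)

lemma bl_right: "bounded_linear (\<lambda>M::real^'n^'n. M ** B)"
  by (intro bl_fin linearI) (simp_all add: vec_eq_iff matrix_matrix_mult_def sum_distrib_left algebra_simps sum.distrib)

lemma bl_mv: "bounded_linear (\<lambda>M::real^'n^'n. M *v v)"
  by (intro bl_fin linearI) (simp_all add: matrix_vector_mult_add_rdistrib scaleR_matrix_vector_assoc)

lemma bl_nth2: "bounded_linear (\<lambda>M::real^'n^'n. M $ i $ j)"
  by (rule bounded_linear_compose[OF bounded_linear_vec_nth bounded_linear_vec_nth])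

lemma vec2_has_vector_derivative:
  fixes f :: "real \<Rightarrow> real^'n^'n"
  assumes "\<And>i j. ((\<lambda>s. f s $ i $ j) has_real_derivative (D $ i $ j)) (at s)"
  shows "(f has_vector_derivative D) (at s)"
  unfolding has_vector_derivative_def
proof (subst has_derivative_componentwise_within, intro ballI)
  fix b :: "real^'n^'n" assume "b \<in> Basis"
  then obtain i j where b: "b = axis i (axis j 1)"
    by (auto simp: Basis_vec_def)
  have "((\<lambda>s. f s $ i $ j) has_derivative (\<lambda>h. h * D $ i $ j)) (at s)"
  proof -
    have "(\<lambda>h. h * D $ i $ j) = (*) (D $ i $ j)" by (auto simp: mult.commute)
    then show ?thesis using assms[of i j] by (simp add: has_field_derivative_def)
  qed
  then show "((\<lambda>x. f x \<bullet> b) has_derivative (\<lambda>x. x *\<^sub>R D \<bullet> b)) (at s)"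
    by (simp add: b inner_axis)
qed

lemma mp_left_nth:
  fixes B :: "real^'n^'n"
  assumes "entire c"
  shows "(B ** mpowser c B) $ i $ j = (\<Sum>k. c k * mpow B (Suc k) $ i $ j)"
  using mp_linear[OF assms bounded_linear_compose[OF bl_nth2 bl_left]] by simp

lemma mp_deriv:
  fixes B :: "real^'n^'n"
  assumes a: "entire a"
  shows "((\<lambda>s. mpowser (\<lambda>k. a k * s ^ k) B) has_vector_derivative
           (B ** mpowser (\<lambda>k. diffs a k * s ^ k) B)) (at s)"
proof (rule vec2_has_vector_derivative)
  fix i j
  define e where "e k = a k * mpow B k $ i $ j" for k
  have sm: "summable (\<lambda>n. e n * y ^ n)" for y
  proof -
    have "summable (\<lambda>k. \<bar>a k * y ^ k * mpow B k $ i $ j\<bar>)"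
      by (rule mp_nth_summable[OF entire_pow[OF a]])
    then show ?thesis unfolding e_def
      by (rule summable_rabs_cancel[of "\<lambda>k. a k * y ^ k * mpow B k $ i $ j", THEN summable_cong[THEN iffD1, rotated]])
         (simp add: algebra_simps)
  qed
  have D: "((\<lambda>x. \<Sum>n. e n * x ^ n) has_field_derivative (\<Sum>n. diffs e n * s ^ n)) (at s)"
    by (rule termdiffs_strong_converges_everywhere) (rule sm)
  have L: "(\<lambda>s. mpowser (\<lambda>k. a k * s ^ k) B $ i $ j) = (\<lambda>x. \<Sum>n. e n * x ^ n)"
    by (rule ext) (simp add: mp_nth[OF entire_pow[OF a]] e_def algebra_simps)
  have R: "(B ** mpowser (\<lambda>k. diffs a k * s ^ k) B) $ i $ j = (\<Sum>n. diffs e n * s ^ n)"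
    unfolding mp_left_nth[OF entire_pow[OF entire_diffs[OF a]]]
    by (simp add: e_def diffs_def mult_ac del: mpow.simps)
  show "((\<lambda>s. mpowser (\<lambda>k. a k * s ^ k) B $ i $ j) has_real_derivative
          (B ** mpowser (\<lambda>k. diffs a k * s ^ k) B) $ i $ j) (at s)"
    unfolding L R by (rule D)
qed



lemma inner_ext: "(\<And>a. p \<bullet> a = q \<bullet> a) \<Longrightarrow> p = (q::'a::real_inner)"
  by (metis inner_diff_left inner_eq_zero_iff right_minus_eq)

lemma Jmat_inner:
  fixes br :: "real^'n \<Rightarrow> real^'n \<Rightarrow> real^'m"
  assumes "bilinear br"
  shows "(Jmat br \<mu> *v x) \<bullet> y = \<mu> \<bullet> br x y"
proof -
  have x: "x = (\<Sum>j\<in>UNIV. x $ j *\<^sub>R axis j 1)" and y: "y = (\<Sum>k\<in>UNIV. y $ k *\<^sub>R axis k 1)"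
    using basis_expansion[of x] basis_expansion[of y] by (simp_all add: scalar_mult_eq_scaleR)
  have "br x y = (\<Sum>(j,k)\<in>UNIV \<times> UNIV. br (x $ j *\<^sub>R axis j 1) (y $ k *\<^sub>R axis k 1))"
    by (subst x, subst y, rule bilinear_sum[OF assms])
  also have "\<dots> = (\<Sum>(j,k)\<in>UNIV \<times> UNIV. (x $ j * y $ k) *\<^sub>R br (axis j 1) (axis k 1))"
    by (simp add: bilinear_lmul[OF assms] bilinear_rmul[OF assms] mult.commute)
  finally have "\<mu> \<bullet> br x y = (\<Sum>(j,k)\<in>UNIV \<times> UNIV. (x $ j * y $ k) * (\<mu> \<bullet> br (axis j 1) (axis k 1)))"
    by (simp add: inner_sum_right case_prod_unfold)
  also have "\<dots> = (\<Sum>k\<in>UNIV. \<Sum>j\<in>UNIV. (x $ j * y $ k) * (\<mu> \<bullet> br (axis j 1) (axis k 1)))"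
    by (subst sum.cartesian_product[symmetric]) (subst sum.swap, simp)
  also have "\<dots> = (Jmat br \<mu> *v x) \<bullet> y"
    unfolding inner_vec_def[of "Jmat br \<mu> *v x" y]
    by (simp add: matrix_vector_mult_def Jmat_def sum_distrib_right sum_distrib_left mult_ac)
  finally show ?thesis by simp
qed

lemma Jmat_add: "Jmat br (\<mu> + \<nu>) = Jmat br \<mu> + Jmat br \<nu>"
  by (simp add: Jmat_def vec_eq_iff inner_add_left)

lemma Jmat_scale: "Jmat br (c *\<^sub>R \<mu>) = c *\<^sub>R Jmat br \<mu>"
  by (simp add: Jmat_def vec_eq_iff)

lemma Jmat_linear: "linear (Jmat br)"
  by (intro linearI Jmat_add Jmat_scale)

lemma Jmat_bilinear: "bilinear (\<lambda>\<mu> x. Jmat br \<mu> *v x)"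
  unfolding bilinear_def
  by (auto intro!: linearI simp: Jmat_add Jmat_scale matrix_vector_mult_add_rdistrib
      scaleR_matrix_vector_assoc matrix_vector_right_distrib matrix_vector_mult_scaleR)



lemma Jmat_zero[simp]: "Jmat br 0 = 0"
  by (simp add: Jmat_def vec_eq_iff)

lemma ham_eqs:
  fixes br :: "real^'n \<Rightarrow> real^'n \<Rightarrow> real^'m"
    and \<gamma> :: "real \<Rightarrow> ((real^'n) \<times> (real^'m)) \<times> ((real^'n) \<times> (real^'m))" and s :: real
  assumes bl: "bilinear br" and skew: "\<And>x y. br x y = - br y x"
    and ham: "hamiltonian_curve (sR_hamiltonian br) \<gamma>"
  defines "w0 \<equiv> fst (snd (\<gamma> s)) + (1/2) *\<^sub>R (Jmat br (snd (snd (\<gamma> s))) *v fst (fst (\<gamma> s)))"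
  shows "w0 \<noteq> 0 \<and> (\<gamma> has_vector_derivative
     ((w0 /\<^sub>R norm w0, (1/2) *\<^sub>R br (fst (fst (\<gamma> s))) (w0 /\<^sub>R norm w0)),
      ((1/2) *\<^sub>R (Jmat br (snd (snd (\<gamma> s))) *v (w0 /\<^sub>R norm w0)), 0))) (at s)"
proof -
  obtain Dq Dp where H: "(sR_hamiltonian br has_derivative (\<lambda>h. Dq \<bullet> fst h + Dp \<bullet> snd h)) (at (\<gamma> s))"
    and G: "(\<gamma> has_vector_derivative (Dp, - Dq)) (at s)"
    using ham unfolding hamiltonian_curve_def by blast
  define z0 where "z0 = \<gamma> s"
  define x0 where "x0 = fst (fst z0)"
  define \<mu>0 where "\<mu>0 = snd (snd z0)"
  define g :: "((real^'n) \<times> (real^'m)) \<times> ((real^'n) \<times> (real^'m)) \<Rightarrow> real^'n" where "g z = fst (snd z) + (1/2) *\<^sub>R (Jmat br (snd (snd z)) *v fst (fst z))" for z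
  have Hdef: "sR_hamiltonian br = (\<lambda>z. norm (g z))"
    by (rule ext) (simp add: sR_hamiltonian_def g_def split: prod.splits)
  have gz0: "g z0 = w0" by (simp add: g_def w0_def z0_def)
  have H0: "((\<lambda>z. norm (g z)) has_derivative (\<lambda>h. Dq \<bullet> fst h + Dp \<bullet> snd h)) (at z0)"
    using H unfolding Hdef z0_def .
  have w0nz: "w0 \<noteq> 0"
  proof
    assume w0: "w0 = 0"
    define a :: "real^'n" where "a = axis undefined 1"
    have na: "norm a = 1" by (simp add: a_def)
    define h0 where "h0 = ((0::real^'n, 0::real^'m), (a, 0::real^'m))"
    define c where "c = Dq \<bullet> fst h0 + Dp \<bullet> snd h0"
    define f where "f r = norm (g (z0 + r *\<^sub>R h0))" for r
    have fr: "f r = \<bar>r\<bar>" for r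
    proof -
      have "g (z0 + r *\<^sub>R h0) = g z0 + r *\<^sub>R a"
        by (simp add: g_def h0_def algebra_simps)
      then show ?thesis by (simp add: f_def gz0 w0 na)
    qed
    have "((\<lambda>r. z0 + r *\<^sub>R h0) has_derivative (\<lambda>r. r *\<^sub>R h0)) (at 0)"
      by (auto intro!: derivative_eq_intros)
    moreover have "((\<lambda>z. norm (g z)) has_derivative (\<lambda>h. Dq \<bullet> fst h + Dp \<bullet> snd h)) (at (z0 + 0 *\<^sub>R h0))"
      using H0 by simp
    ultimately have "(f has_derivative (\<lambda>r. Dq \<bullet> fst (r *\<^sub>R h0) + Dp \<bullet> snd (r *\<^sub>R h0))) (at 0)"
      unfolding f_def[abs_def] by (rule has_derivative_compose)
    moreover have "(\<lambda>r. Dq \<bullet> fst (r *\<^sub>R h0) + Dp \<bullet> snd (r *\<^sub>R h0)) = (*) c"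
      by (rule ext) (simp add: c_def algebra_simps)
    ultimately have Df: "DERIV f 0 :> c" by (metis has_field_derivative_def)
    have c0: "c = 0"
      by (rule DERIV_local_min[OF Df, of 1]) (auto simp: fr)
    have "DERIV (\<lambda>r. f r - r) 0 :> c - 1"
      using DERIV_diff[OF Df DERIV_ident] by simp
    then have "c - 1 = 0"
      by (rule DERIV_local_min[of _ _ _ 1]) (auto simp: fr)
    with c0 show False by simp
  qed
  have BB: "bounded_bilinear (\<lambda>\<mu> x. Jmat br \<mu> *v (x::real^'n))"
    using Jmat_bilinear[of br] bilinear_conv_bounded_bilinear by blast
  have B1: "((\<lambda>z. Jmat br (snd (snd z)) *v fst (fst z)) has_derivative
      (\<lambda>h. Jmat br (snd (snd z0)) *v fst (fst h) + Jmat br (snd (snd h)) *v fst (fst z0))) (at z0)"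
    using bounded_bilinear.FDERIV[OF BB, where f="\<lambda>z. snd (snd z)" and f'="\<lambda>h. snd (snd h)"
        and g="\<lambda>z. fst (fst z)" and g'="\<lambda>h. fst (fst h)" and x=z0 and s=UNIV]
      has_derivative_snd[OF has_derivative_snd[OF has_derivative_ident], of "at z0"]
      has_derivative_fst[OF has_derivative_fst[OF has_derivative_ident], of "at z0"]
    by blast
  have Dg: "(g has_derivative (\<lambda>h. fst (snd h) + (1/2) *\<^sub>R (Jmat br \<mu>0 *v fst (fst h) + Jmat br (snd (snd h)) *v x0))) (at z0)"
    unfolding g_def x0_def \<mu>0_def
    by (rule has_derivative_add[OF has_derivative_fst[OF has_derivative_snd[OF has_derivative_ident]]
          has_derivative_scaleR_right[OF B1]])
  define v where "v = w0 /\<^sub>R norm w0"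
  have Dn: "((\<lambda>z. norm (g z)) has_derivative
      (\<lambda>h. (fst (snd h) + (1/2) *\<^sub>R (Jmat br \<mu>0 *v fst (fst h) + Jmat br (snd (snd h)) *v x0)) \<bullet> v)) (at z0)"
    using has_derivative_compose[OF Dg has_derivative_norm[of "g z0"]] w0nz
    by (simp add: gz0 v_def sgn_div_norm)
  have E: "Dq \<bullet> fst h + Dp \<bullet> snd h =
      (fst (snd h) + (1/2) *\<^sub>R (Jmat br \<mu>0 *v fst (fst h) + Jmat br (snd (snd h)) *v x0)) \<bullet> v" for h
    using has_derivative_unique[OF H0 Dn] by metis
  obtain qx qu where Dq: "Dq = (qx, qu)" by (cases Dq)
  obtain px pm where Dp: "Dp = (px, pm)" by (cases Dp)
  have px: "px = v"
  proof (rule inner_ext)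
    fix a
    show "px \<bullet> a = v \<bullet> a"
      using E[of "((0,0),(a,0))"] by (simp add: Dq Dp inner_commute)
  qed
  have pm: "pm = (1/2) *\<^sub>R br x0 v"
  proof (rule inner_ext)
    fix b
    show "pm \<bullet> b = (1/2) *\<^sub>R br x0 v \<bullet> b"
      using E[of "((0,0),(0,b))"] Jmat_inner[OF bl, of b x0 v] by (simp add: Dq Dp inner_commute)
  qed
  have qx: "qx = - ((1/2) *\<^sub>R (Jmat br \<mu>0 *v v))"
  proof (rule inner_ext)
    fix a
    show "qx \<bullet> a = - ((1/2) *\<^sub>R (Jmat br \<mu>0 *v v)) \<bullet> a"
      using E[of "((a,0),(0,0))"] skew[of a v] by (simp add: Dq Dp Jmat_inner[OF bl])
  qed
  have qu: "qu = 0"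
  proof (rule inner_ext)
    fix b
    show "qu \<bullet> b = 0 \<bullet> b"
      using E[of "((0,b),(0,0))"] by (simp add: Dq Dp)
  qed
  show ?thesis
    using w0nz G by (simp add: Dq Dp px pm qx qu v_def x0_def \<mu>0_def z0_def)
qed



lemma hvd_fst: "(f has_vector_derivative D) F \<Longrightarrow> ((\<lambda>x. fst (f x)) has_vector_derivative fst D) F"
  unfolding has_vector_derivative_def by (drule has_derivative_fst) simp

lemma hvd_snd: "(f has_vector_derivative D) F \<Longrightarrow> ((\<lambda>x. snd (f x)) has_vector_derivative snd D) F"
  unfolding has_vector_derivative_def by (drule has_derivative_snd) simp

lemma hvd_linear:
  assumes bl: "bounded_linear L" and f: "(f has_vector_derivative D) F"
  shows "((\<lambda>x. L (f x)) has_vector_derivative L D) F"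
  using bounded_linear.has_derivative[OF bl f[unfolded has_vector_derivative_def]]
  unfolding has_vector_derivative_def by (simp add: linear_scale[OF bounded_linear.linear[OF bl]])

lemma bb_mv: "bounded_bilinear (\<lambda>(A::real^'n^'n) (x::real^'n). A *v x)"
proof -
  have "bilinear (\<lambda>(A::real^'n^'n) (x::real^'n). A *v x)"
    unfolding bilinear_def
    by (auto intro!: linearI simp: matrix_vector_mult_add_rdistrib
      scaleR_matrix_vector_assoc matrix_vector_right_distrib matrix_vector_mult_scaleR)
  then show ?thesis using bilinear_conv_bounded_bilinear by blast
qed

lemma hvd_mv:
  fixes F :: "real \<Rightarrow> real^'n^'n"
  assumes "(F has_vector_derivative F') (at s)" "(w has_vector_derivative w') (at s)"
  shows "((\<lambda>s. F s *v w s) has_vector_derivative (F s *v w' + F' *v w s)) (at s)"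
  using bounded_bilinear.has_vector_derivative[OF bb_mv assms] by simp

lemma vd_zero_const:
  fixes f :: "real \<Rightarrow> 'b::real_normed_vector"
  assumes "\<And>s. (f has_vector_derivative 0) (at s)"
  shows "f s = f 0"
proof -
  have "\<exists>c. \<forall>x\<in>UNIV. f x = c"
    by (rule has_derivative_zero_constant[of UNIV]) (use assms in \<open>auto simp: has_vector_derivative_def\<close>)
  then show ?thesis by auto
qed

lemma mpow_comm: "mpow B k ** B = B ** mpow B k"
  using mpow_add[of B k 1] mpow_add[of B 1 k] by (simp add: add.commute)

lemma mp_comm:
  fixes B :: "real^'n^'n"
  assumes "entire c"
  shows "mpowser c B ** B = B ** mpowser c B"
  using mp_linear[OF assms bl_right[of B]] mp_linear[OF assms bl_left[of B]]
  by (simp add: mpow_comm)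

lemma entire_shift: "entire c \<Longrightarrow> entire (\<lambda>k. if k = 0 then 0 else c (k - 1))"
proof (rule entireI)
  fix r :: real assume "entire c" "r \<ge> 0"
  have "summable (\<lambda>k. r * (\<bar>c k\<bar> * r ^ k))"
    by (rule summable_mult[OF entireD[OF \<open>entire c\<close>]])
  then have "summable (\<lambda>k. \<bar>(\<lambda>k. if k = 0 then 0 else c (k - 1)) (Suc k)\<bar> * r ^ (Suc k))"
    by (simp add: mult_ac)
  then show "summable (\<lambda>k. \<bar>if k = 0 then 0 else c (k - 1)\<bar> * r ^ k)"
    by (subst summable_Suc_iff[symmetric])
qed

lemma conv_X: "conv (\<lambda>k. if k = 1 then 1 else 0) c = (\<lambda>k. if k = 0 then 0 else c (k - 1))"
proof (rule ext)
  fix k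
  have "conv (\<lambda>k. if k = 1 then 1 else 0) c k = (\<Sum>p\<le>k. if p = 1 then c (k - p) else 0)"
    unfolding conv_def by (intro sum.cong) auto
  also have "\<dots> = (if k = 0 then 0 else c (k - 1))" by auto
  finally show "conv (\<lambda>k. if k = 1 then 1 else 0) c k = (if k = 0 then 0 else c (k - 1))" .
qed

lemma mp_shift:
  fixes B :: "real^'n^'n"
  assumes "entire c"
  shows "B ** mpowser c B = mpowser (\<lambda>k. if k = 0 then 0 else c (k - 1)) B"
proof -
  have e1: "entire (\<lambda>k. if k = 1 then 1 else 0)" by (rule entire_finite[of "{1}"]) auto
  show ?thesis
    using mp_mult[OF e1 assms, of B] unfolding mp_X conv_X .
qed

lemma conv_exp: "conv (\<lambda>k. 1 / fact k * x ^ k) (\<lambda>k. 1 / fact k * y ^ k) = (\<lambda>k. 1 / fact k * (x + y) ^ k)"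
proof (rule ext)
  fix k
  have "(x + y) ^ k = (\<Sum>p\<le>k. of_nat (k choose p) * x ^ p * y ^ (k - p))"
    by (rule binomial_ring)
  then have "1 / fact k * (x + y) ^ k = (\<Sum>p\<le>k. (of_nat (k choose p) / fact k) * x ^ p * y ^ (k - p))"
    by (simp add: sum_distrib_left sum_divide_distrib mult_ac)
  also have "\<dots> = (\<Sum>p\<le>k. 1 / fact p * x ^ p * (1 / fact (k - p) * y ^ (k - p)))"
    by (intro sum.cong refl) (simp add: binomial_fact field_simps)
  finally show "conv (\<lambda>k. 1 / fact k * x ^ k) (\<lambda>k. 1 / fact k * y ^ k) k = 1 / fact k * (x + y) ^ k"
    by (simp add: conv_def)
qed

lemma mp_deriv1:
  fixes B :: "real^'n^'n"
  assumes c: "entire c"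
  shows "((\<lambda>s. mpowser (\<lambda>k. c k * s ^ Suc k) B) has_vector_derivative
           mpowser (\<lambda>k. of_nat (Suc k) * c k * s ^ k) B) (at s)"
proof -
  have eq: "mpowser (\<lambda>k. c k * s ^ Suc k) B = s *\<^sub>R mpowser (\<lambda>k. c k * s ^ k) B" for s
    by (simp add: mp_scale[OF entire_pow[OF c]] mult_ac)
  have ed: "entire (\<lambda>k. diffs c k * s ^ k)" by (rule entire_pow[OF entire_diffs[OF c]])
  have D: "((\<lambda>s. s *\<^sub>R mpowser (\<lambda>k. c k * s ^ k) B) has_vector_derivative
        (s *\<^sub>R (B ** mpowser (\<lambda>k. diffs c k * s ^ k) B) + 1 *\<^sub>R mpowser (\<lambda>k. c k * s ^ k) B)) (at s)"
    by (intro has_vector_derivative_scaleR mp_deriv[OF c] DERIV_ident)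
  have "s *\<^sub>R (B ** mpowser (\<lambda>k. diffs c k * s ^ k) B) + 1 *\<^sub>R mpowser (\<lambda>k. c k * s ^ k) B
      = mpowser (\<lambda>k. s * (if k = 0 then 0 else diffs c (k - 1) * s ^ (k - 1)) + c k * s ^ k) B"
    unfolding mp_shift[OF ed] scaleR_one
    by (subst mp_scale[OF entire_shift[OF ed]], subst mp_add[OF entire_scale[OF entire_shift[OF ed]] entire_pow[OF c]]) simp
  also have "\<dots> = mpowser (\<lambda>k. of_nat (Suc k) * c k * s ^ k) B"
  proof -
    have "s * (if k = 0 then 0 else diffs c (k - 1) * s ^ (k - 1)) + c k * s ^ k = of_nat (Suc k) * c k * s ^ k" for k
    proof (cases k)
      case (Suc j)
      then show ?thesis by (simp add: diffs_def algebra_simps)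
    qed simp
    then show ?thesis by simp
  qed
  finally show ?thesis using D unfolding eq by simp
qed



lemma mat_mult_scaleR_right: "(A::real^'n^'n) ** (c *\<^sub>R B) = c *\<^sub>R (A ** B)"
  by (simp add: vec_eq_iff matrix_matrix_mult_def sum_distrib_left mult_ac)

lemma mat_mult_scaleR_left: "(c *\<^sub>R (A::real^'n^'n)) ** B = c *\<^sub>R (A ** B)"
  by (simp add: vec_eq_iff matrix_matrix_mult_def sum_distrib_left mult_ac)

lemma mv_uminus: "(- (A::real^'n^'n)) *v x = - (A *v x)"
  by (simp add: vec_eq_iff matrix_vector_mult_def sum_negf)

lemma mv_scaleR: "((c::real) *\<^sub>R (A::real^'n^'n)) *v x = c *\<^sub>R (A *v x)"
  by (simp add: vec_eq_iff matrix_vector_mult_def sum_distrib_left mult_ac)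

lemma suc_fact: "real (Suc k) * (1 / fact (Suc k)) = 1 / fact k"
  by (simp add: fact_Suc del: of_nat_Suc)

lemma diffs_exp_coef: "diffs (\<lambda>k. 1 / fact k * (\<rho>::real) ^ k) k * s ^ k = \<rho> * (1 / fact k * \<rho> ^ k * s ^ k)"
  unfolding diffs_def
  by (metis (no_types, lifting) mult.assoc mult.left_commute power_Suc suc_fact)

lemma pc_coef: "of_nat (Suc k) * (\<rho> ^ k / fact (Suc k)) * s ^ k = 1 / fact k * (\<rho>::real) ^ k * s ^ k"
  using suc_fact[of k] by (metis (no_types, lifting) mult.assoc mult.left_commute times_divide_eq_right mult_1_right)

lemma curve:
  fixes br :: "real^'n \<Rightarrow> real^'n \<Rightarrow> real^'m"
    and \<gamma> :: "real \<Rightarrow> ((real^'n) \<times> (real^'m)) \<times> ((real^'n) \<times> (real^'m))"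
    and \<xi> :: "real^'n" and \<mu> :: "real^'m"
  assumes bl: "bilinear br" and skew: "\<And>x y. br x y = - br y x"
    and ham: "hamiltonian_curve (sR_hamiltonian br) \<gamma>"
    and init: "\<gamma> 0 = ((0, 0), (\<xi>, \<mu>))"
    and xi_nz: "\<xi> \<noteq> 0" and mu_nz: "\<mu> \<noteq> 0"
    and \<rho>_def: "\<rho> = norm \<mu> / norm \<xi>"
    and J_def: "J = Jmat br ((1 / norm \<mu>) *\<^sub>R \<mu>)"
    and E_def: "E = (\<lambda>s. mpowser (\<lambda>k. 1 / fact k * \<rho> ^ k * s ^ k) J)"
    and P_def: "P = (\<lambda>s. mpowser (\<lambda>k. \<rho> ^ k / fact (Suc k) * s ^ Suc k) J)"
  shows "\<forall>s. fst (fst (\<gamma> s)) = (1 / norm \<xi>) *\<^sub>R (P s *v \<xi>)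
           \<and> fst (snd (\<gamma> s)) = (1/2) *\<^sub>R (E s *v \<xi> + \<xi>)
           \<and> ((\<lambda>s. snd (fst (\<gamma> s))) has_vector_derivative
                 (1/2) *\<^sub>R br (fst (fst (\<gamma> s))) ((1 / norm \<xi>) *\<^sub>R (E s *v \<xi>))) (at s)
           \<and> \<mu> \<bullet> snd (fst (\<gamma> s)) = s * norm \<xi> / 2 - (1 / (2 * norm \<xi>)) * (\<xi> \<bullet> (P s *v \<xi>))"
proof -
  define X where "X s = fst (fst (\<gamma> s))" for s
  define U where "U s = snd (fst (\<gamma> s))" for s
  define Xi where "Xi s = fst (snd (\<gamma> s))" for s
  define M where "M s = snd (snd (\<gamma> s))" for s
  define W where "W s = Xi s + (1/2) *\<^sub>R (Jmat br (M s) *v X s)" for s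
  define v where "v s = W s /\<^sub>R norm (W s)" for s
  have HE: "W s \<noteq> 0 \<and> (\<gamma> has_vector_derivative ((v s, (1/2) *\<^sub>R br (X s) (v s)),
      ((1/2) *\<^sub>R (Jmat br (M s) *v v s), 0))) (at s)" for s
    using ham_eqs[OF bl skew ham, of s] unfolding W_def v_def X_def Xi_def M_def by simp
  have dX: "(X has_vector_derivative v s) (at s)" for s
    using hvd_fst[OF hvd_fst[OF conjunct2[OF HE[of s]]]] unfolding X_def[abs_def] by simp
  have dU: "(U has_vector_derivative (1/2) *\<^sub>R br (X s) (v s)) (at s)" for s
    using hvd_snd[OF hvd_fst[OF conjunct2[OF HE[of s]]]] unfolding U_def[abs_def] by simp
  have dXi: "(Xi has_vector_derivative (1/2) *\<^sub>R (Jmat br (M s) *v v s)) (at s)" for s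
    using hvd_fst[OF hvd_snd[OF conjunct2[OF HE[of s]]]] unfolding Xi_def[abs_def] by simp
  have dM: "(M has_vector_derivative 0) (at s)" for s
    using hvd_snd[OF hvd_snd[OF conjunct2[OF HE[of s]]]] unfolding M_def[abs_def] by simp
  have X0: "X 0 = 0" and U0: "U 0 = 0" and Xi0: "Xi 0 = \<xi>" and M0: "M 0 = \<mu>"
    by (simp_all add: X_def U_def Xi_def M_def init)
  have Mc: "M s = \<mu>" for s using vd_zero_const[OF dM, of s] M0 by simp
  define Jm where "Jm = Jmat br \<mu>"
  have nmu: "norm \<mu> > 0" and nxi: "norm \<xi> > 0" using mu_nz xi_nz by auto
  have JmJ: "Jm = norm \<mu> *\<^sub>R J"
    using Jmat_scale[of br "norm \<mu>" "(1 / norm \<mu>) *\<^sub>R \<mu>"] nmu by (simp add: Jm_def J_def)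
  have Jskew: "(Jm *v x) \<bullet> x = 0" for x
  proof -
    have "br x x + br x x = 0" by (metis skew[of x x] add.right_inverse)
    then have "(2::real) *\<^sub>R br x x = 0" by (simp add: scaleR_2)
    then have "br x x = 0" by simp
    then show ?thesis by (simp add: Jm_def Jmat_inner[OF bl])
  qed
  have Wdef: "W s = Xi s + (1/2) *\<^sub>R (Jm *v X s)" for s by (simp add: W_def Mc Jm_def)
  have blJm: "bounded_linear (\<lambda>x. Jm *v x)"
    using matrix_vector_mul_linear linear_conv_bounded_linear by blast
  have dJX: "((\<lambda>s. Jm *v X s) has_vector_derivative Jm *v v s) (at s)" for s
    by (rule hvd_linear[OF blJm dX])
  have dW: "(W has_vector_derivative Jm *v v s) (at s)" for s
  proof -
    have "((\<lambda>s. Xi s + (1/2) *\<^sub>R (Jm *v X s)) has_vector_derivative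
        (1/2) *\<^sub>R (Jm *v v s) + (1/2) *\<^sub>R (Jm *v v s)) (at s)"
    proof (rule has_vector_derivative_add)
      show "(Xi has_vector_derivative (1/2) *\<^sub>R (Jm *v v s)) (at s)"
        using dXi[of s] by (simp add: Mc Jm_def)
      show "((\<lambda>s. (1/2) *\<^sub>R (Jm *v X s)) has_vector_derivative (1/2) *\<^sub>R (Jm *v v s)) (at s)"
        by (rule hvd_linear[OF bounded_linear_compose[OF bounded_linear_scaleR_right blJm] dX])
    qed
    then show ?thesis unfolding Wdef[abs_def] by (simp add: scaleR_add_left[symmetric])
  qed
  have WW: "W s \<bullet> W s = \<xi> \<bullet> \<xi>" for s
  proof -
    have "((\<lambda>s. W s \<bullet> W s) has_vector_derivative 0) (at s)" for s
    proof -
      have "(Jm *v v s) \<bullet> W s = 0"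
        by (simp add: v_def scaleR_matrix_vector_assoc[symmetric] matrix_vector_mult_scaleR Jskew)
      then show ?thesis
        using bounded_bilinear.has_vector_derivative[OF bounded_bilinear_inner dW[of s] dW[of s]]
        by (simp add: inner_commute)
    qed
    from vd_zero_const[OF this, of s] show ?thesis by (simp add: Wdef X0 Xi0)
  qed
  have nW: "norm (W s) = norm \<xi>" for s
    using WW[of s] by (simp add: norm_eq_sqrt_inner)
  have vW: "v s = (1 / norm \<xi>) *\<^sub>R W s" for s by (simp add: v_def nW divide_inverse_commute)
  have dWr: "(W has_vector_derivative \<rho> *\<^sub>R (J *v W s)) (at s)" for s
  proof -
    have "Jm *v v s = \<rho> *\<^sub>R (J *v W s)"
      by (simp add: vW JmJ \<rho>_def scaleR_matrix_vector_assoc[symmetric] matrix_vector_mult_scaleR)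
    then show ?thesis using dW[of s] by simp
  qed
  define a where "a k = 1 / fact k * \<rho> ^ k" for k
  define b where "b k = 1 / fact k * (- \<rho>) ^ k" for k
  have ea: "entire a" unfolding a_def by (rule entire_pow[OF entire_exp])
  have eb: "entire b" unfolding b_def by (rule entire_pow[OF entire_exp])
  define F where "F s = mpowser (\<lambda>k. b k * s ^ k) J" for s
  have Eeq: "E s = mpowser (\<lambda>k. a k * s ^ k) J" for s by (simp add: E_def a_def)
  have dE: "(E has_vector_derivative \<rho> *\<^sub>R (J ** E s)) (at s)" for s
  proof -
    have "(\<lambda>k. diffs a k * s ^ k) = (\<lambda>k. \<rho> * (a k * s ^ k))"
      by (rule ext) (simp only: a_def[abs_def] diffs_exp_coef)
    then show ?thesis
      using mp_deriv[OF ea, of J s] unfolding Eeq[abs_def]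
      by (simp only: mp_scale[OF entire_pow[OF ea], symmetric] mat_mult_scaleR_right)
  qed
  have dF: "(F has_vector_derivative (- \<rho>) *\<^sub>R (J ** F s)) (at s)" for s
  proof -
    have "(\<lambda>k. diffs b k * s ^ k) = (\<lambda>k. (- \<rho>) * (b k * s ^ k))"
      by (rule ext) (simp only: b_def[abs_def] diffs_exp_coef)
    then show ?thesis
      using mp_deriv[OF eb, of J s] unfolding F_def[abs_def]
      by (simp only: mp_scale[OF entire_pow[OF eb], symmetric] mat_mult_scaleR_right)
  qed
  have FJ: "F s ** J = J ** F s" for s unfolding F_def by (rule mp_comm[OF entire_pow[OF eb]])
  have z: "F s *v W s = \<xi>" for s
  proof -
    have "((\<lambda>s. F s *v W s) has_vector_derivative 0) (at s)" for s
    proof -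
      have "F s *v (\<rho> *\<^sub>R (J *v W s)) + ((- \<rho>) *\<^sub>R (J ** F s)) *v W s = 0"
        by (simp add: matrix_vector_mult_scaleR mv_scaleR mv_uminus matrix_vector_mul_assoc FJ)
      then show ?thesis using hvd_mv[OF dF[of s] dWr[of s]] by simp
    qed
    from vd_zero_const[OF this, of s] have "F s *v W s = F 0 *v W 0" .
    moreover have "F 0 = mat 1"
    proof -
      have "(\<lambda>k. b k * 0 ^ k) = (\<lambda>k. if k = 0 then 1 else 0)" by (rule ext) (simp add: b_def)
      then show ?thesis by (simp add: F_def mp_one)
    qed
    moreover have "W 0 = \<xi>" by (simp add: Wdef X0 Xi0)
    ultimately show ?thesis by simp
  qed
  have EF: "E s ** F s = mat 1" for s
  proof -
    have "conv (\<lambda>k. a k * s ^ k) (\<lambda>k. b k * s ^ k) = (\<lambda>k. 1 / fact k * (\<rho> * s + (- \<rho>) * s) ^ k)"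
    proof -
      have "(\<lambda>k. a k * s ^ k) = (\<lambda>k. 1 / fact k * (\<rho> * s) ^ k)"
        by (rule ext) (simp add: a_def power_mult_distrib)
      moreover have "(\<lambda>k. b k * s ^ k) = (\<lambda>k. 1 / fact k * ((- \<rho>) * s) ^ k)"
        by (rule ext) (simp only: b_def power_mult_distrib mult.assoc)
      ultimately show ?thesis by (simp only: conv_exp)
    qed
    also have "\<dots> = (\<lambda>k. if k = 0 then 1 else 0)" by (rule ext) simp
    finally show ?thesis
      unfolding Eeq F_def by (simp add: mp_mult[OF entire_pow[OF ea] entire_pow[OF eb]] mp_one)
  qed
  have WE: "W s = E s *v \<xi>" for s
  proof -
    have "W s = (E s ** F s) *v W s" by (simp add: EF)
    also have "\<dots> = E s *v \<xi>" by (simp add: matrix_vector_mul_assoc[symmetric] z)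
    finally show ?thesis .
  qed
  have XiX: "Xi s = \<xi> + (1/2) *\<^sub>R (Jm *v X s)" for s
  proof -
    have "((\<lambda>s. Xi s - (1/2) *\<^sub>R (Jm *v X s)) has_vector_derivative 0) (at s)" for s
    proof -
      have "((\<lambda>s. Xi s - (1/2) *\<^sub>R (Jm *v X s)) has_vector_derivative
             (1/2) *\<^sub>R (Jm *v v s) - (1/2) *\<^sub>R (Jm *v v s)) (at s)"
      proof (rule has_vector_derivative_diff)
        show "(Xi has_vector_derivative (1/2) *\<^sub>R (Jm *v v s)) (at s)"
          using dXi[of s] by (simp add: Mc Jm_def)
        show "((\<lambda>s. (1/2) *\<^sub>R (Jm *v X s)) has_vector_derivative (1/2) *\<^sub>R (Jm *v v s)) (at s)"
          by (rule hvd_linear[OF bounded_linear_compose[OF bounded_linear_scaleR_right blJm] dX])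
      qed
      then show ?thesis by simp
    qed
    from vd_zero_const[OF this, of s] show ?thesis by (simp add: X0 Xi0 algebra_simps)
  qed
  have half: "(1/2::real) *\<^sub>R x + (1/2) *\<^sub>R x = x" for x :: "real^'n"
    by (simp add: scaleR_add_left[symmetric])
  have KW: "Jm *v X s = W s - \<xi>" for s
  proof -
    have "W s = \<xi> + ((1/2) *\<^sub>R (Jm *v X s) + (1/2) *\<^sub>R (Jm *v X s))"
      using XiX[of s] Wdef[of s] by (simp add: add.assoc)
    then show ?thesis by (simp add: half)
  qed
  have XiW: "Xi s = (1/2) *\<^sub>R (E s *v \<xi> + \<xi>)" for s
  proof -
    have "Xi s = ((1/2) *\<^sub>R \<xi> + (1/2) *\<^sub>R \<xi>) + (1/2) *\<^sub>R (W s - \<xi>)"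
      using XiX[of s] KW[of s] by (simp add: half)
    also have "\<dots> = (1/2) *\<^sub>R (W s + \<xi>)"
      by (simp add: scaleR_diff_right scaleR_add_right)
    finally show ?thesis by (simp add: WE)
  qed
  define pc where "pc k = \<rho> ^ k / fact (Suc k)" for k
  have rho0: "\<rho> \<ge> 0" by (simp add: \<rho>_def)
  have epc: "entire pc"
  proof (rule entire_bound[OF ea, where C=1])
    fix k
    have "\<rho> ^ k / fact (Suc k) \<le> \<rho> ^ k / fact k"
      using rho0 by (intro divide_left_mono) (auto simp: fact_mono)
    then show "\<bar>pc k\<bar> \<le> 1 * \<bar>a k\<bar>" using rho0 by (simp add: pc_def a_def)
  qed
  have Peq: "P s = mpowser (\<lambda>k. pc k * s ^ Suc k) J" for s by (simp add: P_def pc_def)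
  have dP: "(P has_vector_derivative E s) (at s)" for s
  proof -
    have "(\<lambda>k. of_nat (Suc k) * pc k * s ^ k) = (\<lambda>k. a k * s ^ k)"
      by (rule ext) (simp only: pc_def a_def pc_coef)
    then show ?thesis using mp_deriv1[OF epc, of J s] unfolding Peq[abs_def] Eeq by simp
  qed
  have dPx: "((\<lambda>s. P s *v \<xi>) has_vector_derivative E s *v \<xi>) (at s)" for s
    by (rule hvd_linear[OF bl_mv dP])
  have P0: "P 0 = 0"
  proof -
    have "(\<lambda>k. pc k * 0 ^ Suc k) = (\<lambda>k. 0)" by (rule ext) simp
    then show ?thesis by (simp add: Peq mp_zero)
  qed
  have XP: "X s = (1 / norm \<xi>) *\<^sub>R (P s *v \<xi>)" for s
  proof -
    have "((\<lambda>s. X s - (1 / norm \<xi>) *\<^sub>R (P s *v \<xi>)) has_vector_derivative 0) (at s)" for s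
    proof -
      have "((\<lambda>s. X s - (1 / norm \<xi>) *\<^sub>R (P s *v \<xi>)) has_vector_derivative
              v s - (1 / norm \<xi>) *\<^sub>R (E s *v \<xi>)) (at s)"
        by (rule has_vector_derivative_diff[OF dX hvd_linear[OF bounded_linear_scaleR_right dPx]])
      then show ?thesis by (simp add: vW WE)
    qed
    from vd_zero_const[OF this, of s] show ?thesis by (simp add: X0 P0)
  qed
  have vE: "v s = (1 / norm \<xi>) *\<^sub>R (E s *v \<xi>)" for s by (simp add: vW WE)
  have muU: "\<mu> \<bullet> U s = s * norm \<xi> / 2 - (1 / (2 * norm \<xi>)) * (\<xi> \<bullet> (P s *v \<xi>))" for s
  proof -
    define g where "g s = \<mu> \<bullet> U s - (s * norm \<xi> / 2 - (1 / (2 * norm \<xi>)) * (\<xi> \<bullet> (P s *v \<xi>)))" for s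
    have "(g has_vector_derivative 0) (at s)" for s
    proof -
      have d1: "((\<lambda>s. \<mu> \<bullet> U s) has_vector_derivative \<mu> \<bullet> ((1/2) *\<^sub>R br (X s) (v s))) (at s)"
        by (rule hvd_linear[OF bounded_linear_inner_right dU])
      have d2: "((\<lambda>s. \<xi> \<bullet> (P s *v \<xi>)) has_vector_derivative \<xi> \<bullet> (E s *v \<xi>)) (at s)"
        by (rule hvd_linear[OF bounded_linear_inner_right dPx])
      have d3: "((\<lambda>s. s * norm \<xi> / 2) has_vector_derivative norm \<xi> / 2) (at s)"
        unfolding has_real_derivative_iff_has_vector_derivative[symmetric]
        by (auto intro!: derivative_eq_intros)
      have dg: "(g has_vector_derivative (\<mu> \<bullet> ((1/2) *\<^sub>R br (X s) (v s)) -
           (norm \<xi> / 2 - (1 / (2 * norm \<xi>)) * (\<xi> \<bullet> (E s *v \<xi>))))) (at s)"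
        unfolding g_def[abs_def]
        by (intro has_vector_derivative_diff d1 d3 hvd_linear[OF bounded_linear_mult_right d2])
      have "\<mu> \<bullet> ((1/2) *\<^sub>R br (X s) (v s)) = (1/2) * ((Jm *v X s) \<bullet> v s)"
        by (simp add: Jm_def Jmat_inner[OF bl])
      also have "Jm *v X s = W s - \<xi>"
        by (rule KW)
      also have "(1/2) * ((W s - \<xi>) \<bullet> v s) = norm \<xi> / 2 - (1 / (2 * norm \<xi>)) * (\<xi> \<bullet> (E s *v \<xi>))"
      proof -
        have nn: "\<xi> \<bullet> \<xi> = norm \<xi> * norm \<xi>" by (simp add: power2_norm_eq_inner[symmetric] power2_eq_square)
        have "(W s - \<xi>) \<bullet> v s = (W s \<bullet> W s - \<xi> \<bullet> W s) / norm \<xi>"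
          by (simp add: vW inner_diff_left)
        also have "\<dots> = (norm \<xi> * norm \<xi> - \<xi> \<bullet> (E s *v \<xi>)) / norm \<xi>"
          using WW[of s] nn by (simp add: WE[symmetric])
        finally show ?thesis using nxi by (simp add: field_simps)
      qed
      finally have "\<mu> \<bullet> ((1/2) *\<^sub>R br (X s) (v s)) -
           (norm \<xi> / 2 - (1 / (2 * norm \<xi>)) * (\<xi> \<bullet> (E s *v \<xi>))) = 0" by simp
      then show ?thesis using dg by metis
    qed
    from vd_zero_const[OF this, of s] have "g s = g 0" .
    then show ?thesis by (simp add: g_def U0 P0)
  qed
  show ?thesis
    using XP XiW dU muU unfolding X_def Xi_def U_def vE by (auto simp: vE[unfolded v_def])
qed



lemma conv_comm: "conv a b = conv b a"
proof (rule ext)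
  fix k
  have "conv a b k = (\<Sum>p\<in>{0..k}. a p * b (k - p))" by (simp add: conv_def atLeast0AtMost)
  also have "\<dots> = (\<Sum>p\<in>{0..k}. a (k - p) * b (k - (k - p)))"
    by (subst sum.atLeastAtMost_rev) simp
  also have "\<dots> = (\<Sum>p\<in>{0..k}. b p * a (k - p))"
    by (intro sum.cong refl) (auto simp: mult.commute)
  finally show "conv a b k = conv b a k" by (simp add: conv_def atLeast0AtMost)
qed

lemma conv_pow: "conv (\<lambda>k. a k * x ^ k) (\<lambda>k. b k * x ^ k) = (\<lambda>k. conv a b k * x ^ k)"
proof (rule ext)
  fix k
  have "conv (\<lambda>k. a k * x ^ k) (\<lambda>k. b k * x ^ k) k = (\<Sum>p\<le>k. a p * b (k - p) * x ^ k)"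
    unfolding conv_def
  proof (intro sum.cong refl)
    fix p assume "p \<in> {..k}"
    then have "x ^ p * x ^ (k - p) = x ^ k" by (simp flip: power_add)
    then show "a p * x ^ p * (b (k - p) * x ^ (k - p)) = a p * b (k - p) * x ^ k"
      by (metis mult.assoc mult.left_commute)
  qed
  then show "conv (\<lambda>k. a k * x ^ k) (\<lambda>k. b k * x ^ k) k = conv a b k * x ^ k"
    by (simp add: conv_def sum_distrib_right)
qed

definition shc :: "nat \<Rightarrow> real" where "shc k = (if even k then 1 / fact (k + 1) else 0)"
definition chc :: "nat \<Rightarrow> real" where "chc k = (if even k then 1 / fact k else 0)"

lemma binom_inv: "p \<le> n \<Longrightarrow> 1 / (fact p * fact (n - p)) = real (n choose p) / (fact n :: real)"
  by (simp add: binomial_fact)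

lemma conv_shc_exp: "conv shc (\<lambda>k. 1 / fact k) k = 2 ^ k / fact (k + 1)"
proof -
  have "conv shc (\<lambda>k. 1 / fact k) k = (\<Sum>p\<le>k. (if odd (Suc p) then real (Suc k choose Suc p) else 0)) / fact (Suc k)"
    unfolding conv_def sum_divide_distrib
  proof (intro sum.cong refl)
    fix p assume p: "p \<in> {..k}"
    then have "1 / (fact (Suc p) * fact (Suc k - Suc p)) = real (Suc k choose Suc p) / (fact (Suc k) :: real)"
      by (intro binom_inv) auto
    then show "shc p * (1 / fact (k - p)) = (if odd (Suc p) then real (Suc k choose Suc p) else 0) / fact (Suc k)"
      by (simp add: shc_def)
  qed
  also have "(\<Sum>p\<le>k. (if odd (Suc p) then real (Suc k choose Suc p) else 0)) = (\<Sum>i\<le>Suc k. if odd i then real (Suc k choose i) else 0)"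
    by (subst sum.atMost_Suc_shift) simp
  also have "\<dots> = 2 ^ k"
    using choose_odd_sum[of "Suc k", where 'a=real] by simp
  finally show ?thesis by simp
qed

lemma conv_chc_exp: "conv chc (\<lambda>k. 1 / fact k) k = (2 ^ k / fact k + (if k = 0 then 1 else 0)) / 2"
proof (cases "k = 0")
  case True then show ?thesis by (simp add: conv_def chc_def)
next
  case False
  have "conv chc (\<lambda>k. 1 / fact k) k = (\<Sum>p\<le>k. (if even p then real (k choose p) else 0)) / fact k"
    unfolding conv_def sum_divide_distrib
  proof (intro sum.cong refl)
    fix p assume p: "p \<in> {..k}"
    then have "1 / (fact p * fact (k - p)) = real (k choose p) / (fact k :: real)"
      by (intro binom_inv) auto
    then show "chc p * (1 / fact (k - p)) = (if even p then real (k choose p) else 0) / fact k"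
      by (simp add: chc_def)
  qed
  also have "(\<Sum>p\<le>k. (if even p then real (k choose p) else 0)) = 2 ^ k / 2"
    using choose_even_sum[of k, where 'a=real] False by simp
  finally show ?thesis using False by simp
qed

lemma conv_shc_chc: "conv shc chc k = (if even k then 2 ^ k / fact (k + 1) else 0)"
proof (cases "even k")
  case True
  have "conv shc chc k = conv shc (\<lambda>k. 1 / fact k) k"
    unfolding conv_def
  proof (intro sum.cong refl)
    fix p assume "p \<in> {..k}"
    then show "shc p * chc (k - p) = shc p * (1 / fact (k - p))"
      using True by (auto simp: shc_def chc_def)
  qed
  then show ?thesis using True by (simp add: conv_shc_exp)
next
  case False
  have "conv shc chc k = 0"
    unfolding conv_def
  proof (intro sum.neutral ballI)
    fix p assume "p \<in> {..k}"
    then show "shc p * chc (k - p) = 0"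
      using False by (auto simp: shc_def chc_def)
  qed
  then show ?thesis using False by simp
qed

lemma entire_shc: "entire shc"
proof (rule entire_bound[OF entire_exp, where C=1])
  fix k
  have "1 / fact (k + 1) \<le> (1::real) / fact k"
    by (rule divide_left_mono) (auto intro: fact_mono)
  then show "\<bar>shc k\<bar> \<le> 1 * \<bar>1 / fact k\<bar>" by (simp add: shc_def)
qed

lemma entire_chc: "entire chc"
  by (rule entire_bound[OF entire_exp, where C=1]) (auto simp: chc_def)

lemma entire_expm1: "entire (\<lambda>k. s ^ (k + 1) / fact (k + 1))"
proof (rule entire_bound[OF entire_pow[OF entire_exp, of s], where C="\<bar>s\<bar>"])
  fix k
  have "\<bar>s ^ (k + 1) / fact (k + 1)\<bar> = \<bar>s\<bar> * (\<bar>s\<bar> ^ k / fact (k + 1))"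
    by (simp add: abs_mult power_abs)
  also have "\<dots> \<le> \<bar>s\<bar> * (\<bar>s\<bar> ^ k / fact k)"
    by (intro mult_left_mono divide_left_mono) (auto simp: fact_mono)
  finally show "\<bar>s ^ (k + 1) / fact (k + 1)\<bar> \<le> \<bar>s\<bar> * \<bar>1 / fact k * s ^ k\<bar>"
    by (simp add: abs_mult power_abs)
qed

lemma mp_cong: "(\<And>k. c k = d k) \<Longrightarrow> mpowser c B = mpowser d B"
  by (rule arg_cong[where f="\<lambda>c. mpowser c B"]) (rule ext)

lemma skew_pow:
  fixes J :: "real^'n^'n"
  assumes sk: "\<And>x y. (J *v x) \<bullet> y = - (x \<bullet> (J *v y))"
  shows "(mpow J k *v x) \<bullet> y = (-1) ^ k * (x \<bullet> (mpow J k *v y))"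
proof (induction k arbitrary: x y)
  case 0 then show ?case by simp
next
  case (Suc k)
  have "(mpow J (Suc k) *v x) \<bullet> y = (J *v (mpow J k *v x)) \<bullet> y"
    by (simp add: matrix_vector_mul_assoc)
  also have "\<dots> = - ((mpow J k *v x) \<bullet> (J *v y))" by (rule sk)
  also have "\<dots> = - ((-1) ^ k * (x \<bullet> (mpow J k *v (J *v y))))" by (simp add: Suc.IH)
  also have "mpow J k *v (J *v y) = mpow J (Suc k) *v y"
    by (simp add: matrix_vector_mul_assoc mpow_comm del: mpow.simps) (simp add: mpow_comm)
  finally show ?case by simp
qed

lemma skew_quad_odd:
  fixes J :: "real^'n^'n"
  assumes sk: "\<And>x y. (J *v x) \<bullet> y = - (x \<bullet> (J *v y))" and "odd k"
  shows "x \<bullet> (mpow J k *v x) = 0"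
  using skew_pow[OF sk, of k x x] assms(2) by (simp add: inner_commute)

lemma mp_quad_even:
  fixes J :: "real^'n^'n"
  assumes sk: "\<And>x y. (J *v x) \<bullet> y = - (x \<bullet> (J *v y))"
    and c: "entire c" and d: "entire d" and cd: "\<And>k. even k \<Longrightarrow> c k = d k"
  shows "x \<bullet> (mpowser c J *v x) = x \<bullet> (mpowser d J *v x)"
proof -
  have bl: "bounded_linear (\<lambda>M::real^'n^'n. x \<bullet> (M *v x))"
    by (rule bounded_linear_compose[OF bounded_linear_inner_right bl_mv])
  have "x \<bullet> (mpowser c J *v x) = (\<Sum>k. c k *\<^sub>R (x \<bullet> (mpow J k *v x)))" by (rule mp_linear[OF c bl])
  also have "\<dots> = (\<Sum>k. d k *\<^sub>R (x \<bullet> (mpow J k *v x)))"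
  proof (rule arg_cong[where f=suminf], rule ext)
    fix k show "c k *\<^sub>R (x \<bullet> (mpow J k *v x)) = d k *\<^sub>R (x \<bullet> (mpow J k *v x))"
      by (cases "even k") (auto simp: cd skew_quad_odd[OF sk])
  qed
  also have "\<dots> = x \<bullet> (mpowser d J *v x)" by (rule mp_linear[OF d bl, symmetric])
  finally show ?thesis .
qed



definition hre :: "nat \<Rightarrow> real" where "hre k = (if even k then (-1) ^ (k div 2) else 0)"
definition him :: "nat \<Rightarrow> real" where "him k = (if odd k then (-1) ^ (k div 2) else 0)"

lemma mm_add_left: "((A::real^'n^'n) + B) ** C = A ** C + B ** C"
  by (simp add: vec_eq_iff matrix_matrix_mult_def sum.distrib algebra_simps)

lemma mm_add_right: "(C::real^'n^'n) ** (A + B) = C ** A + C ** B"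
  by (simp add: vec_eq_iff matrix_matrix_mult_def sum.distrib algebra_simps)

lemma mm_uminus_right: "(C::real^'n^'n) ** (- A) = - (C ** A)"
  by (simp add: vec_eq_iff matrix_matrix_mult_def sum_negf)

lemma mpow_H:
  fixes J :: "real^'n^'n"
  assumes HJ: "J ** J = - mat 1"
  shows "mpow J k = hre k *\<^sub>R mat 1 + him k *\<^sub>R J"
proof (induction k)
  case 0 then show ?case by (simp add: hre_def him_def)
next
  case (Suc k)
  have "mpow J (Suc k) = J ** (hre k *\<^sub>R mat 1 + him k *\<^sub>R J)" by (simp add: Suc.IH)
  also have "\<dots> = (- him k) *\<^sub>R mat 1 + hre k *\<^sub>R J"
    by (simp add: mm_add_right mat_mult_scaleR_right HJ)
  also have "- him k = hre (Suc k)"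
    by (cases "even k") (auto simp: hre_def him_def elim!: oddE evenE)
  also have "hre k = him (Suc k)"
    by (cases "even k") (auto simp: hre_def him_def elim!: oddE evenE)
  finally show ?case .
qed

lemma abs_hre: "\<bar>hre k\<bar> \<le> 1" and abs_him: "\<bar>him k\<bar> \<le> 1"
  by (auto simp: hre_def him_def)

lemma entire_summable_w:
  assumes "entire c" "\<And>k. \<bar>w k\<bar> \<le> 1"
  shows "summable (\<lambda>k. c k * w k)"
proof (rule summable_comparison_test'[where N=0])
  show "summable (\<lambda>k. \<bar>c k\<bar> * 1 ^ k)" by (rule entireD[OF assms(1)])
  fix k show "norm (c k * w k) \<le> \<bar>c k\<bar> * 1 ^ k"
    using assms(2)[of k] by (simp add: abs_mult mult_left_le)
qed

lemma mp_H:
  fixes J :: "real^'n^'n"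
  assumes HJ: "J ** J = - mat 1" and c: "entire c"
  shows "mpowser c J = (\<Sum>k. c k * hre k) *\<^sub>R mat 1 + (\<Sum>k. c k * him k) *\<^sub>R J"
proof -
  have s1: "summable (\<lambda>k. c k * hre k)" by (rule entire_summable_w[OF c abs_hre])
  have s2: "summable (\<lambda>k. c k * him k)" by (rule entire_summable_w[OF c abs_him])
  have "mpowser c J = (\<Sum>k. (c k * hre k) *\<^sub>R mat 1 + (c k * him k) *\<^sub>R J)"
    unfolding mpowser_def mpow_H[OF HJ] by (simp add: scaleR_add_right)
  also have "\<dots> = (\<Sum>k. (c k * hre k) *\<^sub>R mat 1) + (\<Sum>k. (c k * him k) *\<^sub>R J)"
    by (rule suminf_add[symmetric]) (auto intro: summable_scaleR_left s1 s2)
  also have "\<dots> = (\<Sum>k. c k * hre k) *\<^sub>R mat 1 + (\<Sum>k. c k * him k) *\<^sub>R J"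
    by (simp add: suminf_scaleR_left[OF s1] suminf_scaleR_left[OF s2])
  finally show ?thesis .
qed

lemma ser_cos: "(\<Sum>k. 1 / fact k * x ^ k * hre k) = cos x"
proof -
  have "(\<lambda>k. 1 / fact k * x ^ k * hre k) = (\<lambda>n. cos_coeff n *\<^sub>R x ^ n)"
    by (rule ext) (simp add: cos_coeff_def hre_def)
  then show ?thesis using cos_converges[of x] sums_unique by metis
qed

lemma ser_sin: "(\<Sum>k. 1 / fact k * x ^ k * him k) = sin x"
proof -
  have "(\<lambda>k. 1 / fact k * x ^ k * him k) = (\<lambda>n. sin_coeff n *\<^sub>R x ^ n)"
  proof (rule ext)
    fix n show "1 / fact n * x ^ n * him n = sin_coeff n *\<^sub>R x ^ n"
      by (cases "even n") (auto simp: sin_coeff_def him_def elim!: oddE)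
  qed
  then show ?thesis using sin_converges[of x] sums_unique by metis
qed

lemma ser_cosh: "(\<Sum>k. chc k * x ^ k * hre k) = cos x"
proof -
  have "(\<lambda>k. chc k * x ^ k * hre k) = (\<lambda>n. cos_coeff n *\<^sub>R x ^ n)"
    by (rule ext) (simp add: cos_coeff_def hre_def chc_def)
  then show ?thesis using cos_converges[of x] sums_unique by metis
qed

lemma ser_cosh_im: "(\<Sum>k. chc k * x ^ k * him k) = 0"
proof -
  have "(\<lambda>k. chc k * x ^ k * him k) = (\<lambda>k. 0)" by (rule ext) (simp add: chc_def him_def)
  then show ?thesis by simp
qed

lemma ser_sinh_im: "(\<Sum>k. shc k * x ^ k * him k) = 0"
proof -
  have "(\<lambda>k. shc k * x ^ k * him k) = (\<lambda>k. 0)" by (rule ext) (simp add: shc_def him_def)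
  then show ?thesis by simp
qed

lemma ser_sinc: "(\<Sum>k. shc k * x ^ k * hre k) = sinc x"
proof (cases "x = 0")
  case True
  have "(\<Sum>k. shc k * hre k * 0 ^ k) = shc 0 * hre 0" by (rule powser_zero)
  then show ?thesis using True by (simp add: sinc_def shc_def hre_def mult_ac)
next
  case False
  have eq: "(\<lambda>n. sin_coeff (Suc n) *\<^sub>R x ^ Suc n) = (\<lambda>n. x * (shc n * x ^ n * hre n))"
  proof (rule ext)
    fix n show "sin_coeff (Suc n) *\<^sub>R x ^ Suc n = x * (shc n * x ^ n * hre n)"
      by (cases "even n") (auto simp: sin_coeff_def shc_def hre_def)
  qed
  have "(\<lambda>n. sin_coeff (Suc n) *\<^sub>R x ^ Suc n) sums sin x"
    using sin_converges[of x] by (subst sums_Suc_iff) (simp add: sin_coeff_def)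
  then have "(\<lambda>n. x * (shc n * x ^ n * hre n)) sums sin x" by (simp only: eq)
  then have "(\<lambda>n. (1 / x) * (x * (shc n * x ^ n * hre n))) sums ((1 / x) * sin x)"
    by (rule sums_mult)
  then have "(\<lambda>n. shc n * x ^ n * hre n) sums (sin x / x)" using False by simp
  then show ?thesis using False by (simp add: sinc_def sums_unique[symmetric])
qed



theorem corollary5p2:
  fixes br :: "real^'n \<Rightarrow> real^'n \<Rightarrow> real^'m"
    and \<xi> :: "real^'n" and \<mu> :: "real^'m" and t :: real
    and \<gamma> :: "real \<Rightarrow> ((real^'n) \<times> (real^'m)) \<times> ((real^'n) \<times> (real^'m))"
  assumes G: "two_step_bracket br"
    and xi_nz: "\<xi> \<noteq> 0" and mu_nz: "\<mu> \<noteq> 0"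
    and ham: "hamiltonian_curve (sR_hamiltonian br) \<gamma>"
    and init: "\<gamma> 0 = ((0, 0), (\<xi>, \<mu>))"
  defines "xt \<equiv> fst (fst (\<gamma> t))" and "ut \<equiv> snd (fst (\<gamma> t))"
    and "\<xi>t \<equiv> fst (snd (\<gamma> t))"
    and "\<theta> \<equiv> t * norm \<mu> / (2 * norm \<xi>)"
    and "\<mu>b \<equiv> (1 / norm \<mu>) *\<^sub>R \<mu>" and "\<xi>b \<equiv> (1 / norm \<xi>) *\<^sub>R \<xi>"
    and "J \<equiv> Jmat br ((1 / norm \<mu>) *\<^sub>R \<mu>)"
  shows "xt = (1 / norm \<mu>) *\<^sub>R (mexpm1_div (2 * \<theta>) J *v \<xi>)
       \<and> xt = t *\<^sub>R ((mexp (\<theta> *\<^sub>R J) ** msinhc (\<theta> *\<^sub>R J)) *v \<xi>b)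
       \<and> \<xi>t = (1/2) *\<^sub>R ((mexp ((2 * \<theta>) *\<^sub>R J) + mat 1) *v \<xi>)
       \<and> \<xi>t = (mexp (\<theta> *\<^sub>R J) ** mcosh (\<theta> *\<^sub>R J)) *v \<xi>
       \<and> ut = (t\<^sup>2 / 4) *\<^sub>R integral {0..1} (\<lambda>\<tau>.
                br (mexpm1_div (2 * \<tau>) (\<theta> *\<^sub>R J) *v \<xi>b) (mexp ((2 * \<tau> * \<theta>) *\<^sub>R J) *v \<xi>b))
       \<and> \<mu> \<bullet> ut = (t * norm \<xi> / 2)
            * (1 - ((msinhc (\<theta> *\<^sub>R J) ** mcosh (\<theta> *\<^sub>R J)) *v \<xi>b) \<bullet> \<xi>b)
       \<and> (heisenberg_type br \<longrightarrow>
            xt = (t * sinc \<theta>) *\<^sub>R ((cos \<theta> *\<^sub>R mat 1 + sin \<theta> *\<^sub>R J) *v \<xi>b)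
          \<and> \<xi>t = cos \<theta> *\<^sub>R ((cos \<theta> *\<^sub>R mat 1 + sin \<theta> *\<^sub>R J) *v \<xi>)
          \<and> ut = (t\<^sup>2 / (4 * \<theta>) * (1 - sinc \<theta> * cos \<theta>)) *\<^sub>R \<mu>b)"
proof -
  have G': "bilinear br \<and> (\<forall>x y. br x y = - br y x)"
    using G unfolding two_step_bracket_def by blast
  then have bl: "bilinear br" and skew: "\<And>x y. br x y = - br y x" by blast+
  define \<rho> where "\<rho> = norm \<mu> / norm \<xi>"
  define E where "E = (\<lambda>s. mpowser (\<lambda>k. 1 / fact k * \<rho> ^ k * s ^ k) J)"
  define P where "P = (\<lambda>s. mpowser (\<lambda>k. \<rho> ^ k / fact (Suc k) * s ^ Suc k) J)"
  have nmu: "norm \<mu> > 0" and nxi: "norm \<xi> > 0" using mu_nz xi_nz by auto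
  have rho_pos: "\<rho> > 0" using nmu nxi by (simp add: \<rho>_def)
  have C: "\<forall>s. fst (fst (\<gamma> s)) = (1 / norm \<xi>) *\<^sub>R (P s *v \<xi>)
           \<and> fst (snd (\<gamma> s)) = (1/2) *\<^sub>R (E s *v \<xi> + \<xi>)
           \<and> ((\<lambda>s. snd (fst (\<gamma> s))) has_vector_derivative
                 (1/2) *\<^sub>R br (fst (fst (\<gamma> s))) ((1 / norm \<xi>) *\<^sub>R (E s *v \<xi>))) (at s)
           \<and> \<mu> \<bullet> snd (fst (\<gamma> s)) = s * norm \<xi> / 2 - (1 / (2 * norm \<xi>)) * (\<xi> \<bullet> (P s *v \<xi>))"
    by (rule curve[OF bl skew ham init xi_nz mu_nz \<rho>_def J_def[THEN meta_eq_to_obj_eq] E_def P_def])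
  have th: "\<theta> = \<rho> * t / 2" using nmu nxi by (simp add: \<theta>_def \<rho>_def mult.commute)
  have xtP: "xt = (1 / norm \<xi>) *\<^sub>R (P t *v \<xi>)" using C by (simp add: xt_def)
  have xiE: "\<xi>t = (1/2) *\<^sub>R (E t *v \<xi> + \<xi>)" using C by (simp add: \<xi>t_def)
  have muU: "\<mu> \<bullet> ut = t * norm \<xi> / 2 - (1 / (2 * norm \<xi>)) * (\<xi> \<bullet> (P t *v \<xi>))" using C by (simp add: ut_def)
  have mexp_eq: "mexp (s *\<^sub>R J) = mpowser (\<lambda>k. 1 / fact k * s ^ k) J" for s
    by (simp add: mexp_def mp_scaleR_arg)
  have shc_eq: "(\<lambda>k. if even k then 1 / fact (k + 1) else 0) = shc" by (rule ext) (simp add: shc_def)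
  have chc_eq: "(\<lambda>k. if even k then 1 / fact k else 0) = chc" by (rule ext) (simp add: chc_def)
  have msinhc_eq: "msinhc (s *\<^sub>R J) = mpowser (\<lambda>k. shc k * s ^ k) J" for s
    by (simp add: msinhc_def mp_scaleR_arg shc_eq)
  have mcosh_eq: "mcosh (s *\<^sub>R J) = mpowser (\<lambda>k. chc k * s ^ k) J" for s
    by (simp add: mcosh_def mp_scaleR_arg chc_eq)
  have Et: "E t = mexp ((2 * \<theta>) *\<^sub>R J)"
    unfolding mexp_eq E_def by (intro mp_cong) (simp add: th power_mult_distrib)
  have prod_sh: "mexp (\<theta> *\<^sub>R J) ** msinhc (\<theta> *\<^sub>R J) = mpowser (\<lambda>k. conv shc (\<lambda>k. 1 / fact k) k * \<theta> ^ k) J"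
    unfolding mexp_eq msinhc_eq mp_mult[OF entire_pow[OF entire_exp] entire_pow[OF entire_shc]] conv_pow
      conv_comm[of "\<lambda>k. 1 / fact k" shc] ..
  have prod_ch: "mexp (\<theta> *\<^sub>R J) ** mcosh (\<theta> *\<^sub>R J) = mpowser (\<lambda>k. conv chc (\<lambda>k. 1 / fact k) k * \<theta> ^ k) J"
    unfolding mexp_eq mcosh_eq mp_mult[OF entire_pow[OF entire_exp] entire_pow[OF entire_chc]] conv_pow
      conv_comm[of "\<lambda>k. 1 / fact k" chc] ..
  have prod_shch: "msinhc (\<theta> *\<^sub>R J) ** mcosh (\<theta> *\<^sub>R J) = mpowser (\<lambda>k. conv shc chc k * \<theta> ^ k) J"
    unfolding msinhc_eq mcosh_eq mp_mult[OF entire_pow[OF entire_shc] entire_pow[OF entire_chc]] conv_pow ..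
  have c1: "xt = (1 / norm \<mu>) *\<^sub>R (mexpm1_div (2 * \<theta>) J *v \<xi>)"
  proof -
    have "P t = (1 / \<rho>) *\<^sub>R mexpm1_div (2 * \<theta>) J"
      unfolding mexpm1_div_def mp_scale[OF entire_expm1] P_def
      by (intro mp_cong) (use rho_pos in \<open>simp add: th power_mult_distrib field_simps\<close>)
    then show ?thesis using nmu nxi
      by (simp add: xtP \<rho>_def mv_scaleR)
  qed
  have c2: "xt = t *\<^sub>R ((mexp (\<theta> *\<^sub>R J) ** msinhc (\<theta> *\<^sub>R J)) *v \<xi>b)"
  proof -
    have tP: "t *\<^sub>R (mexp (\<theta> *\<^sub>R J) ** msinhc (\<theta> *\<^sub>R J)) = P t"
      unfolding prod_sh mp_scale[OF entire_pow[OF entire_conv[OF entire_shc entire_exp]]] P_def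
      by (intro mp_cong) (simp add: conv_shc_exp th power_mult_distrib field_simps)
    then show ?thesis
      by (simp add: xtP \<xi>b_def matrix_vector_mult_scaleR mv_scaleR flip: tP)
  qed
  have c3: "\<xi>t = (1/2) *\<^sub>R ((mexp ((2 * \<theta>) *\<^sub>R J) + mat 1) *v \<xi>)"
    by (simp add: xiE Et matrix_vector_mult_add_rdistrib)
  have c4: "\<xi>t = (mexp (\<theta> *\<^sub>R J) ** mcosh (\<theta> *\<^sub>R J)) *v \<xi>"
  proof -
    have e1: "entire (\<lambda>k. 1 / fact k * (2 * \<theta>) ^ k)" by (rule entire_pow[OF entire_exp])
    have e2: "entire (\<lambda>k. if k = 0 then 1 else 0 :: real)" by (rule entire_finite[of "{0}"]) auto
    have hc: "(1/2) *\<^sub>R (mexp ((2 * \<theta>) *\<^sub>R J) + mat 1) = mexp (\<theta> *\<^sub>R J) ** mcosh (\<theta> *\<^sub>R J)"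
      unfolding prod_ch unfolding mexp_eq mp_one[symmetric, of J] mp_add[OF e1 e2] mp_scale[OF entire_add[OF e1 e2]]
      by (intro mp_cong) (auto simp: conv_chc_exp power_mult_distrib field_simps)
    show ?thesis by (simp only: c3 mv_scaleR[symmetric] hc)
  qed
  have JskG: "(Jmat br \<nu> *v x) \<bullet> y = - (x \<bullet> (Jmat br \<nu> *v y))" for \<nu> x y
    using skew[of x y] by (simp add: Jmat_inner[OF bl] inner_commute[of x])
  have Jsk: "(J *v x) \<bullet> y = - (x \<bullet> (J *v y))" for x y
    unfolding J_def by (rule JskG)
  have c5: "ut = (t\<^sup>2 / 4) *\<^sub>R integral {0..1} (\<lambda>\<tau>.
                br (mexpm1_div (2 * \<tau>) (\<theta> *\<^sub>R J) *v \<xi>b) (mexp ((2 * \<tau> * \<theta>) *\<^sub>R J) *v \<xi>b))"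
  proof -
    define U where "U s = snd (fst (\<gamma> s))" for s
    define g where "g \<tau> = br (mexpm1_div (2 * \<tau>) (\<theta> *\<^sub>R J) *v \<xi>b) (mexp ((2 * \<tau> * \<theta>) *\<^sub>R J) *v \<xi>b)" for \<tau>
    define f' where "f' \<tau> = t *\<^sub>R ((1/2) *\<^sub>R br ((1 / norm \<xi>) *\<^sub>R (P (t * \<tau>) *v \<xi>)) ((1 / norm \<xi>) *\<^sub>R (E (t * \<tau>) *v \<xi>)))" for \<tau>
    have dU: "(U has_vector_derivative (1/2) *\<^sub>R br ((1 / norm \<xi>) *\<^sub>R (P s *v \<xi>)) ((1 / norm \<xi>) *\<^sub>R (E s *v \<xi>))) (at s)" for s
      using C unfolding U_def[abs_def] by metis
    have dUt: "((\<lambda>\<tau>. U (t * \<tau>)) has_vector_derivative f' \<tau>) (at \<tau>)" for \<tau>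
    proof -
      have "((\<lambda>\<tau>. t * \<tau>) has_vector_derivative t) (at \<tau>)"
        unfolding has_real_derivative_iff_has_vector_derivative[symmetric]
        by (auto intro!: derivative_eq_intros)
      from vector_diff_chain_at[OF this dU[of "t * \<tau>"]] show ?thesis
        by (simp add: f'_def o_def)
    qed
    have "(f' has_integral (U (t * 1) - U (t * 0))) {0..1}"
      by (rule fundamental_theorem_of_calculus) (auto intro: has_vector_derivative_at_within dUt)
    then have intf: "integral {0..1} f' = ut"
      by (simp add: U_def ut_def init integral_unique)
    have pw: "f' \<tau> = (t\<^sup>2 / 4) *\<^sub>R g \<tau>" for \<tau>
    proof -
      have P1: "P (t * \<tau>) = (t / 2) *\<^sub>R mexpm1_div (2 * \<tau>) (\<theta> *\<^sub>R J)"
        unfolding mexpm1_div_def mp_scaleR_arg mp_scale[OF entire_pow[OF entire_expm1]] P_def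
        by (intro mp_cong) (simp add: th power_mult_distrib power_divide field_simps)
      have E1: "E (t * \<tau>) = mexp ((2 * \<tau> * \<theta>) *\<^sub>R J)"
        unfolding mexp_eq E_def
        by (intro mp_cong) (simp add: th power_mult_distrib power_divide field_simps)
      show ?thesis
        by (simp add: f'_def g_def P1 E1 \<xi>b_def mv_scaleR matrix_vector_mult_scaleR
            bilinear_lmul[OF bl] bilinear_rmul[OF bl] power2_eq_square)
    qed
    have "f' = (\<lambda>\<tau>. (t\<^sup>2 / 4) *\<^sub>R g \<tau>)" by (rule ext) (rule pw)
    then have "ut = integral {0..1} (\<lambda>\<tau>. (t\<^sup>2 / 4) *\<^sub>R g \<tau>)"
      using intf by simp
    then show ?thesis by (simp add: g_def)
  qed
  have c6: "\<mu> \<bullet> ut = (t * norm \<xi> / 2)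
            * (1 - ((msinhc (\<theta> *\<^sub>R J) ** mcosh (\<theta> *\<^sub>R J)) *v \<xi>b) \<bullet> \<xi>b)"
  proof -
    define S where "S = msinhc (\<theta> *\<^sub>R J) ** mcosh (\<theta> *\<^sub>R J)"
    have ed: "entire (\<lambda>k. conv shc chc k * \<theta> ^ k)"
      by (rule entire_pow[OF entire_conv[OF entire_shc entire_chc]])
    have ceq: "(\<lambda>k. \<rho> ^ k / fact (Suc k) * t ^ Suc k) = (\<lambda>k. (1 / \<rho>) * ((\<rho> * t) ^ (k + 1) / fact (k + 1)))"
      by (rule ext) (use rho_pos in \<open>simp add: power_mult_distrib field_simps\<close>)
    have ec: "entire (\<lambda>k. \<rho> ^ k / fact (Suc k) * t ^ Suc k)"
      unfolding ceq by (rule entire_scale[OF entire_expm1])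
    have tS: "t *\<^sub>R S = mpowser (\<lambda>k. t * (conv shc chc k * \<theta> ^ k)) J"
      unfolding S_def prod_shch by (rule mp_scale[OF ed])
    have quad: "\<xi> \<bullet> (P t *v \<xi>) = \<xi> \<bullet> ((t *\<^sub>R S) *v \<xi>)"
      unfolding tS P_def
    proof (rule mp_quad_even[OF Jsk ec entire_scale[OF ed]])
      fix k :: nat assume "even k"
      then show "\<rho> ^ k / fact (Suc k) * t ^ Suc k = t * (conv shc chc k * \<theta> ^ k)"
        by (simp add: conv_shc_chc th power_mult_distrib power_divide field_simps)
    qed
    have "\<mu> \<bullet> ut = t * norm \<xi> / 2 - (1 / (2 * norm \<xi>)) * (t * (\<xi> \<bullet> (S *v \<xi>)))"
      using muU quad by (simp add: mv_scaleR)
    also have "\<dots> = (t * norm \<xi> / 2) * (1 - (S *v \<xi>b) \<bullet> \<xi>b)"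
      using nxi by (simp add: \<xi>b_def matrix_vector_mult_scaleR inner_commute[of \<xi>] field_simps power2_eq_square)
    finally show ?thesis by (simp add: S_def)
  qed
  have c7: "heisenberg_type br \<longrightarrow>
            xt = (t * sinc \<theta>) *\<^sub>R ((cos \<theta> *\<^sub>R mat 1 + sin \<theta> *\<^sub>R J) *v \<xi>b)
          \<and> \<xi>t = cos \<theta> *\<^sub>R ((cos \<theta> *\<^sub>R mat 1 + sin \<theta> *\<^sub>R J) *v \<xi>)
          \<and> ut = (t\<^sup>2 / (4 * \<theta>) * (1 - sinc \<theta> * cos \<theta>)) *\<^sub>R \<mu>b"
  proof
    assume H: "heisenberg_type br"
    have nmub: "norm \<mu>b = 1" using nmu by (simp add: \<mu>b_def)
    have Jmb: "J = Jmat br \<mu>b" by (simp add: J_def \<mu>b_def)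
    have HJ: "J ** J = - mat 1"
    proof -
      have "- (J ** J) = mat 1" using H nmub unfolding heisenberg_type_def Jmb by simp
      then show ?thesis by (simp add: minus_equation_iff)
    qed
    have mexpH: "mexp (\<theta> *\<^sub>R J) = cos \<theta> *\<^sub>R mat 1 + sin \<theta> *\<^sub>R J"
      unfolding mexp_eq mp_H[OF HJ entire_pow[OF entire_exp]] ser_cos ser_sin ..
    have sinhH: "msinhc (\<theta> *\<^sub>R J) = sinc \<theta> *\<^sub>R mat 1"
      unfolding msinhc_eq mp_H[OF HJ entire_pow[OF entire_shc]] ser_sinc ser_sinh_im by simp
    have coshH: "mcosh (\<theta> *\<^sub>R J) = cos \<theta> *\<^sub>R mat 1"
      unfolding mcosh_eq mp_H[OF HJ entire_pow[OF entire_chc]] ser_cosh ser_cosh_im by simp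
    have h1: "xt = (t * sinc \<theta>) *\<^sub>R ((cos \<theta> *\<^sub>R mat 1 + sin \<theta> *\<^sub>R J) *v \<xi>b)"
      using c2 by (simp add: mexpH sinhH mat_mult_scaleR_right mv_scaleR)
    have h2: "\<xi>t = cos \<theta> *\<^sub>R ((cos \<theta> *\<^sub>R mat 1 + sin \<theta> *\<^sub>R J) *v \<xi>)"
      using c4 by (simp add: mexpH coshH mat_mult_scaleR_right mv_scaleR)
    have nxib: "\<xi>b \<bullet> \<xi>b = 1" using nxi by (simp add: \<xi>b_def power2_norm_eq_inner[symmetric] field_simps)
    have muU2: "\<mu> \<bullet> ut = (t * norm \<xi> / 2) * (1 - sinc \<theta> * cos \<theta>)"
      using c6 by (simp add: sinhH coshH mat_mult_scaleR_right mat_mult_scaleR_left mv_scaleR nxib)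
    have anti: "Jmat br \<nu> ** J + J ** Jmat br \<nu> = 0" if nu: "\<nu> \<bullet> \<mu> = 0" for \<nu>
    proof -
      define Jn where "Jn = Jmat br \<nu>"
      have e1: "- (Jn ** Jn) = (norm \<nu>)\<^sup>2 *\<^sub>R mat 1" using H unfolding heisenberg_type_def Jn_def by blast
      have e2: "- (J ** J) = mat 1" using HJ by simp
      have num: "\<nu> \<bullet> \<mu>b = 0" using nu by (simp add: \<mu>b_def)
      have "(norm (\<nu> + \<mu>b))\<^sup>2 = (norm \<nu>)\<^sup>2 + 1"
      proof -
        have mm: "\<mu>b \<bullet> \<mu>b = 1" using nmub by (metis power2_norm_eq_inner power_one)
        show ?thesis using mm num by (simp add: power2_norm_eq_inner inner_add_left inner_add_right inner_commute)
      qed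
      moreover have "- ((Jn + J) ** (Jn + J)) = (norm (\<nu> + \<mu>b))\<^sup>2 *\<^sub>R mat 1"
        using H unfolding heisenberg_type_def Jn_def Jmb Jmat_add[symmetric] by blast
      ultimately have e3: "- (Jn ** Jn) + - (Jn ** J + J ** Jn) + - (J ** J) = (norm \<nu>)\<^sup>2 *\<^sub>R mat 1 + mat 1"
        by (simp add: mm_add_left mm_add_right scaleR_add_left algebra_simps)
      show ?thesis using e3 unfolding e1 e2 Jn_def[symmetric] by (simp add: neg_eq_iff_add_eq_0)
    qed
    have key: "(Jmat br \<nu> *v (a1 *\<^sub>R \<xi> + b1 *\<^sub>R (J *v \<xi>))) \<bullet> (a2 *\<^sub>R \<xi> + b2 *\<^sub>R (J *v \<xi>)) = 0"
      if nu: "\<nu> \<bullet> \<mu> = 0" for \<nu> a1 b1 a2 b2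
    proof -
      define Jn where "Jn = Jmat br \<nu>"
      have t1: "(Jn *v \<xi>) \<bullet> \<xi> = 0" using JskG[of \<nu> \<xi> \<xi>] by (simp add: Jn_def inner_commute)
      have t4: "(Jn *v (J *v \<xi>)) \<bullet> (J *v \<xi>) = 0"
        using JskG[of \<nu> "J *v \<xi>" "J *v \<xi>"] by (simp add: Jn_def inner_commute)
      have JnJ: "Jn *v (J *v \<xi>) = - (J *v (Jn *v \<xi>))"
        using anti[OF nu] by (simp add: Jn_def matrix_vector_mul_assoc eq_neg_iff_add_eq_0
            flip: matrix_vector_mult_add_rdistrib)
      have t3: "(Jn *v (J *v \<xi>)) \<bullet> \<xi> = (Jn *v \<xi>) \<bullet> (J *v \<xi>)"
        using Jsk[of "Jn *v \<xi>" \<xi>] by (simp add: JnJ)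
      have t2': "(Jn *v \<xi>) \<bullet> (J *v \<xi>) = - ((Jn *v (J *v \<xi>)) \<bullet> \<xi>)"
        using JskG[of \<nu> \<xi> "J *v \<xi>"] by (simp add: Jn_def inner_commute)
      have t2: "(Jn *v \<xi>) \<bullet> (J *v \<xi>) = 0" using t2' t3 by simp
      have t3': "(Jn *v (J *v \<xi>)) \<bullet> \<xi> = 0" using t3 t2 by simp
      show ?thesis
        by (simp add: Jn_def[symmetric] matrix_vector_right_distrib matrix_vector_mult_scaleR
            inner_add_left inner_add_right t1 t2 t3' t4 inner_commute[of \<xi> "Jn *v \<xi>"])
    qed
    have perp: "\<nu> \<bullet> ut = 0" if nu: "\<nu> \<bullet> \<mu> = 0" for \<nu>
    proof -
      define U where "U s = snd (fst (\<gamma> s))" for s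
      have dU: "(U has_vector_derivative (1/2) *\<^sub>R br ((1 / norm \<xi>) *\<^sub>R (P s *v \<xi>)) ((1 / norm \<xi>) *\<^sub>R (E s *v \<xi>))) (at s)" for s
        using C unfolding U_def[abs_def] by metis
      have "((\<lambda>s. \<nu> \<bullet> U s) has_vector_derivative 0) (at s)" for s
      proof -
        have ceqs: "(\<lambda>k. \<rho> ^ k / fact (Suc k) * s ^ Suc k) = (\<lambda>k. (1 / \<rho>) * ((\<rho> * s) ^ (k + 1) / fact (k + 1)))"
          by (rule ext) (use rho_pos in \<open>simp add: power_mult_distrib field_simps\<close>)
        have ecs: "entire (\<lambda>k. \<rho> ^ k / fact (Suc k) * s ^ Suc k)"
          unfolding ceqs by (rule entire_scale[OF entire_expm1])
        obtain a1 b1 where PH: "P s = a1 *\<^sub>R mat 1 + b1 *\<^sub>R J"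
          unfolding P_def using mp_H[OF HJ ecs] by blast
        obtain a2 b2 where EH: "E s = a2 *\<^sub>R mat 1 + b2 *\<^sub>R J"
          unfolding E_def using mp_H[OF HJ entire_pow[OF entire_pow[OF entire_exp]]] by blast
        have "\<nu> \<bullet> ((1/2) *\<^sub>R br ((1 / norm \<xi>) *\<^sub>R (P s *v \<xi>)) ((1 / norm \<xi>) *\<^sub>R (E s *v \<xi>))) = 0"
        proof -
          have "\<nu> \<bullet> br ((1 / norm \<xi>) *\<^sub>R (P s *v \<xi>)) ((1 / norm \<xi>) *\<^sub>R (E s *v \<xi>))
              = (Jmat br \<nu> *v (((1 / norm \<xi>) * a1) *\<^sub>R \<xi> + ((1 / norm \<xi>) * b1) *\<^sub>R (J *v \<xi>))) \<bullet>
                (((1 / norm \<xi>) * a2) *\<^sub>R \<xi> + ((1 / norm \<xi>) * b2) *\<^sub>R (J *v \<xi>))"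
            by (simp add: Jmat_inner[OF bl] PH EH matrix_vector_mult_add_rdistrib mv_scaleR scaleR_add_right)
          also have "\<dots> = 0" by (rule key[OF nu])
          finally show ?thesis by simp
        qed
        then show ?thesis using hvd_linear[OF bounded_linear_inner_right dU[of s], of \<nu>] by simp
      qed
      from vd_zero_const[OF this, of t] show ?thesis by (simp add: U_def ut_def init)
    qed
    define w where "w = ut - (\<mu>b \<bullet> ut) *\<^sub>R \<mu>b"
    have mubmu: "\<mu>b \<bullet> \<mu> = norm \<mu>" by (simp add: \<mu>b_def power2_norm_eq_inner[symmetric] power2_eq_square)
    have mubut: "\<mu>b \<bullet> ut = (\<mu> \<bullet> ut) / norm \<mu>" by (simp add: \<mu>b_def)
    have wmu: "w \<bullet> \<mu> = 0"
    proof -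
      have "w \<bullet> \<mu> = ut \<bullet> \<mu> - (\<mu>b \<bullet> ut) * (\<mu>b \<bullet> \<mu>)" by (simp add: w_def inner_diff_left)
      also have "\<dots> = 0" using nmu by (simp only: mubmu mubut inner_commute[of ut]) simp
      finally show ?thesis .
    qed
    have "w \<bullet> w = w \<bullet> ut - (\<mu>b \<bullet> ut) * (w \<bullet> \<mu>b)" by (simp add: w_def inner_diff_right)
    also have "w \<bullet> \<mu>b = 0" using wmu by (simp add: \<mu>b_def)
    also have "w \<bullet> ut = 0" by (rule perp[OF wmu])
    finally have "w = 0" by simp
    then have utpar: "ut = (\<mu>b \<bullet> ut) *\<^sub>R \<mu>b" by (simp add: w_def)
    have coef: "\<mu>b \<bullet> ut = t\<^sup>2 / (4 * \<theta>) * (1 - sinc \<theta> * cos \<theta>)"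
    proof (cases "t = 0")
      case True then show ?thesis using mubut muU2 by (simp add: \<theta>_def)
    next
      case False
      then show ?thesis using mubut muU2 nmu nxi by (simp add: \<theta>_def power2_eq_square field_simps)
    qed
    have h3: "ut = (t\<^sup>2 / (4 * \<theta>) * (1 - sinc \<theta> * cos \<theta>)) *\<^sub>R \<mu>b"
      using utpar coef by simp
    show "xt = (t * sinc \<theta>) *\<^sub>R ((cos \<theta> *\<^sub>R mat 1 + sin \<theta> *\<^sub>R J) *v \<xi>b)
          \<and> \<xi>t = cos \<theta> *\<^sub>R ((cos \<theta> *\<^sub>R mat 1 + sin \<theta> *\<^sub>R J) *v \<xi>)
          \<and> ut = (t\<^sup>2 / (4 * \<theta>) * (1 - sinc \<theta> * cos \<theta>)) *\<^sub>R \<mu>b"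
      using h1 h2 h3 by blast
  qed
  show ?thesis using c1 c2 c3 c4 c5 c6 c7 by blast
qed


end
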